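(* For every $\epsilon>0$, every $n$-vertex tree $T$ with maximum degree $d$ admits a proper straight-line drawing such that no three vertices are collinear, the spanning ratio is at most $1+\epsilon$, the distance between any two vertices is at least $1$, and the width, the height, and the edge-length ratio are in $\mathcal O\!\left(n^{\frac{\log_2(2+\lceil 2/\epsilon\rceil)}{\log_2(d/(d-1))}}\cdot\frac{1}{\epsilon}\right)$.
   Context: A straight-line drawing maps vertices to distinct points and edges to straight-line segments; it is proper if no edge contains a vertex other than its end-vertices. In a straight-line drawing $\Gamma$, $\pi_\Gamma(u,v)$ is the minimum total Euclidean length of a path between $u$ and $v$, $\|uv\|_\Gamma$ is their Euclidean distance, and the spanning ratio is $\max_{u\neq v}\pi_\Gamma(u,v)/\|uv\|_\Gamma$. The edge-length ratio is the ratio between the lengths of the longest and shortest edges. The width and height of a drawing are those of the smallest axis-parallel rectangle containing it. The $\mathcal O$ notation hides absolute constants. *)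

theory Defs
  imports "HOL-Analysis.Analysis"
begin

definition simple_graph :: "'a set \<Rightarrow> 'a set set \<Rightarrow> bool" where
  "simple_graph V E \<longleftrightarrow> finite V \<and> (\<forall>e\<in>E. \<exists>u v. u \<noteq> v \<and> u \<in> V \<and> v \<in> V \<and> e = {u, v})"

definition adj :: "'a set set \<Rightarrow> 'a \<Rightarrow> 'a \<Rightarrow> bool" where
  "adj E u v \<longleftrightarrow> {u, v} \<in> E"

definition is_path :: "'a set \<Rightarrow> 'a set set \<Rightarrow> 'a list \<Rightarrow> bool" where
  "is_path V E ws \<longleftrightarrow> ws \<noteq> [] \<and> distinct ws \<and> set ws \<subseteq> V \<and>
     (\<forall>i. Suc i < length ws \<longrightarrow> adj E (ws ! i) (ws ! Suc i))"

definition connected_graph :: "'a set \<Rightarrow> 'a set set \<Rightarrow> bool" where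
  "connected_graph V E \<longleftrightarrow> (\<forall>u\<in>V. \<forall>v\<in>V. \<exists>ws. is_path V E ws \<and> hd ws = u \<and> last ws = v)"

definition acyclic_graph :: "'a set \<Rightarrow> 'a set set \<Rightarrow> bool" where
  "acyclic_graph V E \<longleftrightarrow> \<not> (\<exists>ws. is_path V E ws \<and> length ws \<ge> 3 \<and> adj E (last ws) (hd ws))"

definition is_tree :: "'a set \<Rightarrow> 'a set set \<Rightarrow> bool" where
  "is_tree V E \<longleftrightarrow> simple_graph V E \<and> V \<noteq> {} \<and> connected_graph V E \<and> acyclic_graph V E"

definition degree :: "'a set set \<Rightarrow> 'a \<Rightarrow> nat" where
  "degree E v = card {e \<in> E. v \<in> e}"

definition max_degree :: "'a set \<Rightarrow> 'a set set \<Rightarrow> nat" where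
  "max_degree V E = Max (degree E ` V)"

type_synonym point = "real \<times> real"

definition proper_drawing :: "'a set \<Rightarrow> 'a set set \<Rightarrow> ('a \<Rightarrow> point) \<Rightarrow> bool" where
  "proper_drawing V E p \<longleftrightarrow> inj_on p V \<and>
     (\<forall>u\<in>V. \<forall>v\<in>V. \<forall>w\<in>V. adj E u v \<longrightarrow> w \<noteq> u \<longrightarrow> w \<noteq> v \<longrightarrow> p w \<notin> closed_segment (p u) (p v))"

definition no_three_collinear :: "'a set \<Rightarrow> ('a \<Rightarrow> point) \<Rightarrow> bool" where
  "no_three_collinear V p \<longleftrightarrow>
     (\<forall>u\<in>V. \<forall>v\<in>V. \<forall>w\<in>V. u \<noteq> v \<longrightarrow> u \<noteq> w \<longrightarrow> v \<noteq> w \<longrightarrow> \<not> collinear {p u, p v, p w})"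

fun path_length :: "('a \<Rightarrow> point) \<Rightarrow> 'a list \<Rightarrow> real" where
  "path_length p (x # y # ws) = dist (p x) (p y) + path_length p (y # ws)"
| "path_length p _ = 0"

text \<open>Minimum total Euclidean length of a path between u and v (paths are finitely many).\<close>
definition graph_dist :: "'a set \<Rightarrow> 'a set set \<Rightarrow> ('a \<Rightarrow> point) \<Rightarrow> 'a \<Rightarrow> 'a \<Rightarrow> real" where
  "graph_dist V E p u v = Inf {path_length p ws | ws. is_path V E ws \<and> hd ws = u \<and> last ws = v}"

definition spanning_ratio :: "'a set \<Rightarrow> 'a set set \<Rightarrow> ('a \<Rightarrow> point) \<Rightarrow> real" where
  "spanning_ratio V E p =
     Sup {graph_dist V E p u v / dist (p u) (p v) | u v. u \<in> V \<and> v \<in> V \<and> u \<noteq> v}"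

definition edge_length_ratio :: "'a set set \<Rightarrow> ('a \<Rightarrow> point) \<Rightarrow> real" where
  "edge_length_ratio E p =
     Max {dist (p u) (p v) | u v. {u, v} \<in> E} / Min {dist (p u) (p v) | u v. {u, v} \<in> E}"

definition drawing_width :: "'a set \<Rightarrow> ('a \<Rightarrow> point) \<Rightarrow> real" where
  "drawing_width V p = Max ((\<lambda>v. fst (p v)) ` V) - Min ((\<lambda>v. fst (p v)) ` V)"

definition drawing_height :: "'a set \<Rightarrow> ('a \<Rightarrow> point) \<Rightarrow> real" where
  "drawing_height V p = Max ((\<lambda>v. snd (p v)) ` V) - Min ((\<lambda>v. snd (p v)) ` V)"

end

theory Submission
  imports Defs
begin

fun walk :: "'a set \<Rightarrow> 'a set set \<Rightarrow> 'a list \<Rightarrow> bool" where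
  "walk V E [] = False"
| "walk V E [x] = (x \<in> V)"
| "walk V E (x # y # ws) = (x \<in> V \<and> adj E x y \<and> walk V E (y # ws))"

lemma walk_char:
  "walk V E ws \<longleftrightarrow> ws \<noteq> [] \<and> set ws \<subseteq> V \<and> (\<forall>i. Suc i < length ws \<longrightarrow> adj E (ws ! i) (ws ! Suc i))"
proof (induction V E ws rule: walk.induct)
  case (3 V E x y ws)
  show ?case
  proof
    assume a: "walk V E (x # y # ws)"
    then have H: "set (y#ws) \<subseteq> V \<and> (\<forall>i. Suc i < length (y#ws) \<longrightarrow> adj E ((y#ws) ! i) ((y#ws) ! Suc i))"
      using 3 by simp
    show "x # y # ws \<noteq> [] \<and> set (x # y # ws) \<subseteq> V \<and> (\<forall>i. Suc i < length (x # y # ws) \<longrightarrow> adj E ((x # y # ws) ! i) ((x # y # ws) ! Suc i))"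
    proof (intro conjI allI impI)
      fix i assume "Suc i < length (x # y # ws)"
      then show "adj E ((x # y # ws) ! i) ((x # y # ws) ! Suc i)"
        using a H by (cases i) auto
    qed (use a H in auto)
  next
    assume a: "x # y # ws \<noteq> [] \<and> set (x # y # ws) \<subseteq> V \<and> (\<forall>i. Suc i < length (x # y # ws) \<longrightarrow> adj E ((x # y # ws) ! i) ((x # y # ws) ! Suc i))"
    have "adj E x y" using a[THEN conjunct2, THEN conjunct2, rule_format, of 0] by simp
    moreover have "\<forall>i. Suc i < length (y#ws) \<longrightarrow> adj E ((y#ws) ! i) ((y#ws) ! Suc i)"
    proof (intro allI impI)
      fix i assume "Suc i < length (y#ws)"
      then show "adj E ((y#ws) ! i) ((y#ws) ! Suc i)"
        using a[THEN conjunct2, THEN conjunct2, rule_format, of "Suc i"] by simp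
    qed
    ultimately show "walk V E (x # y # ws)" using a 3 by simp
  qed
qed auto

lemma is_path_walk: "is_path V E ws \<longleftrightarrow> walk V E ws \<and> distinct ws"
  unfolding is_path_def walk_char by auto

lemma walk_append: "walk V E (xs @ y # ys) \<longleftrightarrow> walk V E (xs @ [y]) \<and> walk V E (y # ys)"
proof (induction xs)
  case Nil
  then show ?case by (cases ys) auto
next
  case (Cons a xs)
  then show ?case by (cases xs) auto
qed

lemma adj_sym: "adj E x y \<longleftrightarrow> adj E y x"
  unfolding adj_def by (simp add: insert_commute)

lemma walk_rev: "walk V E (rev ws) \<longleftrightarrow> walk V E ws"
proof (induction V E ws rule: walk.induct)
  case (3 V E x y ws)
  have "walk V E (rev (x # y # ws)) \<longleftrightarrow> walk V E (rev ws @ [y]) \<and> walk V E [y, x]"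
    using walk_append[of V E "rev ws" y "[x]"] by simp
  also have "\<dots> \<longleftrightarrow> walk V E (y # ws) \<and> walk V E [y, x]" using 3 by simp
  moreover have "walk V E (y # ws) \<Longrightarrow> y \<in> V" by (cases ws) auto
  ultimately show ?case by (auto simp: adj_sym)
qed auto

lemma path_length_append:
  "path_length p (xs @ y # ys) = path_length p (xs @ [y]) + path_length p (y # ys)"
proof (induction xs)
  case Nil
  then show ?case by (cases ys) auto
next
  case (Cons a xs)
  then show ?case by (cases xs) auto
qed

lemma path_length_nonneg: "path_length p ws \<ge> 0"
  by (induction p ws rule: path_length.induct) auto

lemma walk_to_path:
  assumes "walk V E ws"
  shows "\<exists>ps. is_path V E ps \<and> hd ps = hd ws \<and> last ps = last ws \<and> path_length p ps \<le> path_length p ws"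
  using assms
proof (induction "length ws" arbitrary: ws rule: less_induct)
  case less
  show ?case
  proof (cases "distinct ws")
    case True
    then show ?thesis using less.prems by (auto simp: is_path_walk)
  next
    case False
    then obtain xs y ys zs where ws: "ws = xs @ [y] @ ys @ [y] @ zs"
      using not_distinct_decomp by blast
    define ws' where "ws' = xs @ y # zs"
    have len: "length ws' < length ws" using ws ws'_def by simp
    have w1: "walk V E (xs @ [y])" and w2: "walk V E (y # ys @ y # zs)"
      using less.prems walk_append[of V E xs y "ys @ y # zs"] ws by auto
    have w3: "walk V E (y # zs)"
      using w2 walk_append[of V E "y # ys" y zs] by simp
    have "walk V E ws'" unfolding ws'_def using w1 w3 walk_append[of V E xs y zs] by simp
    then obtain ps where ps: "is_path V E ps" "hd ps = hd ws'" "last ps = last ws'"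
      "path_length p ps \<le> path_length p ws'"
      using less.hyps[OF len] by blast
    have "hd ws' = hd ws" using ws ws'_def by (cases xs) auto
    moreover have "last ws' = last ws" using ws ws'_def by simp
    moreover have "path_length p ws' \<le> path_length p ws"
    proof -
      have "path_length p ws = path_length p (xs @ [y]) + path_length p (y # ys @ y # zs)"
        using ws path_length_append[of p xs y "ys @ y # zs"] by simp
      also have "path_length p (y # ys @ y # zs) = path_length p (y # ys @ [y]) + path_length p (y # zs)"
        using path_length_append[of p "y # ys" y zs] by simp
      finally show ?thesis using path_length_nonneg[of p "y # ys @ [y]"]
          path_length_append[of p xs y zs] ws'_def by simp
    qed
    ultimately show ?thesis using ps by auto
  qed
qed

fun len1 :: "('a \<Rightarrow> real) \<Rightarrow> 'a list \<Rightarrow> real" where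
  "len1 X (x # y # ws) = \<bar>X x - X y\<bar> + len1 X (y # ws)"
| "len1 X _ = 0"

lemma len1_append:
  "len1 X (xs @ y # ys) = len1 X (xs @ [y]) + len1 X (y # ys)"
proof (induction xs)
  case Nil
  then show ?case by (cases ys) auto
next
  case (Cons a xs)
  then show ?case by (cases xs) auto
qed

lemma len1_rev: "len1 X (rev ws) = len1 X ws"
proof (induction X ws rule: len1.induct)
  case (1 X x y ws)
  have "len1 X (rev (x # y # ws)) = len1 X (rev ws @ [y]) + len1 X [y, x]"
    using len1_append[of X "rev ws" y "[x]"] by simp
  then show ?case using 1 by (simp add: abs_minus_commute)
qed auto

lemma path_length_le_len1:
  assumes "set ws \<subseteq> A" "\<forall>a\<in>A. \<forall>b\<in>A. dist (p a) (p b) \<le> K * \<bar>X a - X b\<bar>"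
  shows "path_length p ws \<le> K * len1 X ws"
  using assms
proof (induction X ws rule: len1.induct)
  case (1 X x y ws)
  then show ?case by (simp add: distrib_left add_mono)
qed auto


locale rt =
  fixes V :: "nat set" and E :: "nat set set" and r :: nat and par :: "nat \<Rightarrow> nat"
    and h :: "nat \<Rightarrow> nat" and D :: nat and Q :: real and \<beta> :: real and \<epsilon> :: real
  assumes finV: "finite V" and rV: "r \<in> V"
    and par_r: "par r = r"
    and parV: "\<And>v. v \<in> V \<Longrightarrow> v \<noteq> r \<Longrightarrow> par v \<in> V"
    and par_edge: "\<And>v. v \<in> V \<Longrightarrow> v \<noteq> r \<Longrightarrow> {v, par v} \<in> E"
    and par_h: "\<And>v. v \<in> V \<Longrightarrow> v \<noteq> r \<Longrightarrow> h (par v) < h v"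
    and ch_bound: "\<And>u. u \<in> V \<Longrightarrow> card {c\<in>V. c \<noteq> r \<and> par c = u} \<le> D"
    and Q1: "Q \<ge> 1" and beta1: "\<beta> \<ge> 1" and epsQ: "\<epsilon> * Q \<ge> 2 + \<epsilon>" and eps: "\<epsilon> > 0"
    and EXP: "\<And>j. j + 1 \<le> D \<Longrightarrow> Q ^ j * real (j+1) \<le> real (j+1) powr \<beta>"
begin

definition anc where "anc u v \<longleftrightarrow> (\<exists>k. (par ^^ k) v = u)"
definition desc where "desc u = {v \<in> V. anc u v}"
definition ch where "ch u = {c \<in> V. c \<noteq> r \<and> par c = u}"
definition sz where "sz u = card (desc u)"
definition F :: "nat \<Rightarrow> real" where "F k = real k powr \<beta>"
definition prec where "prec a b \<longleftrightarrow> sz a < sz b \<or> (sz a = sz b \<and> a < b)"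
definition rk where "rk c = card {c' \<in> ch (par c). prec c' c}"
definition off where
  "off c = Q ^ rk c + (\<Sum>c' \<in> {c' \<in> ch (par c). prec c' c}. Q ^ (rk c - rk c') * F (sz c'))"
definition X where "X v = (\<Sum>u \<in> {u \<in> V. u \<noteq> r \<and> anc u v}. off u)"

lemma iterV: "v \<in> V \<Longrightarrow> (par ^^ k) v \<in> V"
proof (induction k)
  case (Suc k)
  then show ?case using parV par_r rV by (cases "(par ^^ k) v = r") auto
qed simp

lemma iter_r: "(par ^^ k) r = r"
  by (induction k) (auto simp: par_r)

lemma iter_h: "v \<in> V \<Longrightarrow> (par ^^ k) v \<noteq> r \<Longrightarrow> h ((par ^^ k) v) + k \<le> h v"
proof (induction k)
  case (Suc k)
  let ?y = "(par ^^ k) v"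
  have y: "?y \<noteq> r" using Suc.prems par_r by auto
  have "h (par ?y) < h ?y" using par_h[OF iterV[OF Suc.prems(1)] y] .
  then show ?case using Suc.IH[OF Suc.prems(1) y] by simp
qed simp

lemma anc_refl: "anc v v"
  unfolding anc_def by (rule exI[of _ 0]) simp

lemma anc_trans: "anc a b \<Longrightarrow> anc b c \<Longrightarrow> anc a c"
  unfolding anc_def by (metis funpow_add comp_apply)

lemma anc_par: "v \<in> V \<Longrightarrow> anc (par v) v"
  unfolding anc_def by (rule exI[of _ 1]) simp

lemma anc_V: "anc u v \<Longrightarrow> v \<in> V \<Longrightarrow> u \<in> V"
  unfolding anc_def using iterV by blast

lemma anc_antisym: "anc a b \<Longrightarrow> anc b a \<Longrightarrow> b \<in> V \<Longrightarrow> a = b"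
proof -
  assume ab: "anc a b" and ba: "anc b a" and bV: "b \<in> V"
  obtain i where i: "(par ^^ i) b = a" using ab anc_def by blast
  obtain j where j: "(par ^^ j) a = b" using ba anc_def by blast
  have aV: "a \<in> V" using i iterV bV by blast
  show "a = b"
  proof (cases "a = r \<or> b = r")
    case True
    then show ?thesis using i j iter_r by auto
  next
    case False
    then have "h a + i \<le> h b" "h b + j \<le> h a" using iter_h[OF bV, of i] iter_h[OF aV, of j] i j by auto
    then have "i = 0" by simp
    then show ?thesis using i by simp
  qed
qed

lemma anc_step: "v \<in> V \<Longrightarrow> v \<noteq> r \<Longrightarrow> anc u v \<longleftrightarrow> u = v \<or> anc u (par v)"
proof
  assume "anc u v"
  then obtain k where k: "(par ^^ k) v = u" using anc_def by blast
  show "u = v \<or> anc u (par v)"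
  proof (cases k)
    case 0 then show ?thesis using k by simp
  next
    case (Suc k')
    then have "(par ^^ k') (par v) = u" using k by (simp add: funpow_Suc_right del: funpow.simps)
    then show ?thesis unfolding anc_def by blast
  qed
next
  assume "u = v \<or> anc u (par v)"
  then show "anc u v"
  proof
    assume "anc u (par v)"
    then obtain k where "(par ^^ k) (par v) = u" using anc_def by blast
    then have "(par ^^ Suc k) v = u" by (simp add: funpow_Suc_right del: funpow.simps)
    then show ?thesis unfolding anc_def by blast
  qed (simp add: anc_refl)
qed

lemma anc_of_r: "anc u r \<Longrightarrow> u = r"
  unfolding anc_def using iter_r by auto

lemma not_anc_par: "v \<in> V \<Longrightarrow> v \<noteq> r \<Longrightarrow> \<not> anc v (par v)"
proof
  assume v: "v \<in> V" "v \<noteq> r" and a: "anc v (par v)"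
  then have "v = par v" using anc_antisym[OF a anc_par[OF v(1)] parV[OF v]] by simp
  then show False using par_h[OF v] by simp
qed

lemma anc_r: "v \<in> V \<Longrightarrow> anc r v"
proof (induction "h v" arbitrary: v rule: less_induct)
  case less
  show ?case
  proof (cases "v = r")
    case True then show ?thesis by (simp add: anc_refl)
  next
    case False
    then have "anc r (par v)" using less.hyps[of "par v"] par_h parV less.prems by blast
    then show ?thesis using anc_step[OF less.prems False] by blast
  qed
qed

lemma anc_chain: "anc a v \<Longrightarrow> anc b v \<Longrightarrow> anc a b \<or> anc b a"
proof -
  assume "anc a v" "anc b v"
  then obtain i j where i: "(par ^^ i) v = a" and j: "(par ^^ j) v = b" using anc_def by blast
  show ?thesis
  proof (cases "i \<le> j")
    case True
    then have "(par ^^ (j - i)) a = b" using i j funpow_add[of "j - i" i par] by (metis comp_apply le_add_diff_inverse2)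
    then show ?thesis unfolding anc_def by blast
  next
    case False
    then have "(par ^^ (i - j)) b = a" using i j funpow_add[of "i - j" j par]
      by (metis comp_apply le_add_diff_inverse2 nat_le_linear)
    then show ?thesis unfolding anc_def by blast
  qed
qed

lemma finite_desc: "finite (desc u)" unfolding desc_def using finV by simp
lemma finite_ch: "finite (ch u)" unfolding ch_def using finV by simp

lemma desc_self: "w \<in> V \<Longrightarrow> w \<in> desc w" unfolding desc_def by (simp add: anc_refl)

lemma ch_props: "c \<in> ch w \<Longrightarrow> c \<in> V \<and> c \<noteq> r \<and> par c = w"
  unfolding ch_def by simp

lemma ch_desc_sub: "c \<in> ch w \<Longrightarrow> desc c \<subseteq> desc w"
proof
  fix v assume c: "c \<in> ch w" and v: "v \<in> desc c"
  have "anc w c" using anc_par[of c] ch_props[OF c] by simp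
  then show "v \<in> desc w" using v anc_trans unfolding desc_def by blast
qed

lemma w_notin_desc_ch: "c \<in> ch w \<Longrightarrow> w \<notin> desc c"
proof
  assume c: "c \<in> ch w" and "w \<in> desc c"
  then have "anc c w" unfolding desc_def by simp
  moreover have "anc w c" using ch_props[OF c] anc_par by metis
  ultimately have "c = w" using anc_antisym ch_props[OF c] parV by metis
  then show False using ch_props[OF c] par_h by fastforce
qed

lemma desc_decomp: "v \<in> desc w \<Longrightarrow> v \<noteq> w \<Longrightarrow> \<exists>c\<in>ch w. v \<in> desc c"
proof (induction "h v" arbitrary: v rule: less_induct)
  case less
  have vV: "v \<in> V" and a: "anc w v" using less.prems unfolding desc_def by auto
  have vr: "v \<noteq> r" using a anc_of_r less.prems by blast
  have a2: "anc w (par v)" using anc_step[OF vV vr, of w] a less.prems(2) by auto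
  show ?case
  proof (cases "par v = w")
    case True
    then have "v \<in> ch w" unfolding ch_def using vV vr by simp
    then show ?thesis using desc_self vV by blast
  next
    case False
    have "par v \<in> desc w" unfolding desc_def using a2 parV vV vr by simp
    then obtain c where c: "c \<in> ch w" "par v \<in> desc c"
      using less.hyps[of "par v"] par_h[OF vV vr] False by blast
    then have "anc c v" unfolding desc_def using anc_step[OF vV vr] by blast
    then show ?thesis using c vV unfolding desc_def by blast
  qed
qed

lemma ch_disj: "c1 \<in> ch w \<Longrightarrow> c2 \<in> ch w \<Longrightarrow> v \<in> desc c1 \<Longrightarrow> v \<in> desc c2 \<Longrightarrow> c1 = c2"
proof -
  assume c1: "c1 \<in> ch w" and c2: "c2 \<in> ch w" and v1: "v \<in> desc c1" and v2: "v \<in> desc c2"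
  have "anc c1 c2 \<or> anc c2 c1" using v1 v2 anc_chain unfolding desc_def by blast
  moreover have "anc c1 c2 \<Longrightarrow> c1 = c2"
    if c1: "c1 \<in> ch w" and c2: "c2 \<in> ch w" for c1 c2
  proof (rule ccontr)
    assume a: "anc c1 c2" and ne: "c1 \<noteq> c2"
    have "anc c1 w" using anc_step[of c2 c1] a ne ch_props[OF c2] by blast
    moreover have "anc w c1" using ch_props[OF c1] anc_par by metis
    ultimately have "c1 = w" using anc_antisym ch_props[OF c1] parV by metis
    then show False using ch_props[OF c1] par_h by fastforce
  qed
  ultimately show "c1 = c2" using c1 c2 by metis
qed

lemma desc_eq: "w \<in> V \<Longrightarrow> desc w = insert w (\<Union>c\<in>ch w. desc c)"
proof -
  assume w: "w \<in> V"
  have "desc w \<subseteq> insert w (\<Union>c\<in>ch w. desc c)"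
  proof
    fix v assume v: "v \<in> desc w"
    show "v \<in> insert w (\<Union>c\<in>ch w. desc c)"
    proof (cases "v = w")
      case False
      then obtain c where "c \<in> ch w" "v \<in> desc c" using desc_decomp[OF v] by blast
      then show ?thesis by blast
    qed simp
  qed
  moreover have "insert w (\<Union>c\<in>ch w. desc c) \<subseteq> desc w"
  proof -
    have "\<And>c. c \<in> ch w \<Longrightarrow> desc c \<subseteq> desc w" by (rule ch_desc_sub)
    then show ?thesis using desc_self[OF w] by blast
  qed
  ultimately show ?thesis by (rule equalityI)
qed

lemma sz_eq: "w \<in> V \<Longrightarrow> sz w = 1 + (\<Sum>c\<in>ch w. sz c)"
proof -
  assume w: "w \<in> V"
  have "card (\<Union>c\<in>ch w. desc c) = (\<Sum>c\<in>ch w. card (desc c))"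
    by (rule card_UN_disjoint) (use finite_ch finite_desc ch_disj in blast)+
  moreover have "w \<notin> (\<Union>c\<in>ch w. desc c)" using w_notin_desc_ch by blast
  moreover have "finite (\<Union>c\<in>ch w. desc c)" using finite_ch finite_desc by blast
  ultimately show ?thesis unfolding sz_def using desc_eq[OF w]
    by (simp add: card_insert_disjoint)
qed

lemma sz_pos: "w \<in> V \<Longrightarrow> sz w \<ge> 1"
  unfolding sz_def using desc_self finite_desc card_0_eq by fastforce

lemma desc_r: "desc r = V"
  unfolding desc_def using anc_r by auto

lemma X_r: "X r = 0"
proof -
  have "{u \<in> V. u \<noteq> r \<and> anc u r} = {}" using anc_of_r by blast
  then show ?thesis unfolding X_def by (metis sum.empty)
qed

lemma X_step: "v \<in> V \<Longrightarrow> v \<noteq> r \<Longrightarrow> X v = X (par v) + off v"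
proof -
  assume v: "v \<in> V" "v \<noteq> r"
  have "{u \<in> V. u \<noteq> r \<and> anc u v} = insert v {u \<in> V. u \<noteq> r \<and> anc u (par v)}"
    using anc_step[OF v] v by auto
  moreover have "v \<notin> {u \<in> V. u \<noteq> r \<and> anc u (par v)}" using not_anc_par[OF v] by simp
  ultimately show ?thesis unfolding X_def using finV by (simp add: add.commute)
qed

lemma F_nonneg: "F k \<ge> 0" unfolding F_def by simp

lemma off_ge1: "off c \<ge> 1"
proof -
  have "Q ^ rk c \<ge> 1" using Q1 by simp
  moreover have "(\<Sum>c' \<in> {c' \<in> ch (par c). prec c' c}. Q ^ (rk c - rk c') * F (sz c')) \<ge> 0"
    using Q1 F_nonneg by (intro sum_nonneg) simp
  ultimately show ?thesis unfolding off_def by simp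
qed

end

lemma len1_nonneg: "len1 X ws \<ge> 0"
  by (induction X ws rule: len1.induct) auto

context rt begin

lemma walk_up: "v \<in> V \<Longrightarrow> anc w v \<Longrightarrow>
  \<exists>ws. walk V E ws \<and> hd ws = v \<and> last ws = w \<and> len1 X ws = X v - X w"
proof (induction "h v" arbitrary: v rule: less_induct)
  case less
  show ?case
  proof (cases "v = w")
    case True
    then show ?thesis using less.prems by (intro exI[of _ "[v]"]) simp
  next
    case False
    have vr: "v \<noteq> r" using anc_of_r less.prems False by blast
    have a2: "anc w (par v)" using anc_step[OF less.prems(1) vr, of w] less.prems(2) False by auto
    obtain ws where ws: "walk V E ws" "hd ws = par v" "last ws = w" "len1 X ws = X (par v) - X w"
      using less.hyps[of "par v"] par_h[OF less.prems(1) vr] parV[OF less.prems(1) vr] a2 by blast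
    obtain rest where rest: "ws = par v # rest" using ws(1,2) by (cases ws) auto
    have "walk V E (v # ws)" using ws(1) rest less.prems(1) par_edge[OF less.prems(1) vr]
      by (simp add: adj_def)
    moreover have "len1 X (v # ws) = X v - X w"
      using rest ws(4) X_step[OF less.prems(1) vr] off_ge1[of v] by simp
    moreover have "last (v # ws) = w" using ws(3) rest by simp
    ultimately show ?thesis by (intro exI[of _ "v # ws"]) simp
  qed
qed

lemma X_mono: "v \<in> V \<Longrightarrow> anc w v \<Longrightarrow> X w \<le> X v"
proof -
  assume "v \<in> V" "anc w v"
  then obtain ws where "len1 X ws = X v - X w" using walk_up by blast
  then show ?thesis using len1_nonneg[of X ws] by simp
qed

lemma prec_irrefl: "\<not> prec a a" unfolding prec_def by simp
lemma prec_trans: "prec a b \<Longrightarrow> prec b c \<Longrightarrow> prec a c" unfolding prec_def by auto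
lemma prec_total: "a \<noteq> b \<Longrightarrow> prec a b \<or> prec b a" unfolding prec_def by auto
lemma prec_sz: "\<not> prec b a \<Longrightarrow> sz a \<le> sz b" unfolding prec_def by auto

lemma rk_ch: "c \<in> ch w \<Longrightarrow> rk c = card {c' \<in> ch w. prec c' c}"
  unfolding rk_def using ch_props by simp

lemma off_ch: "c \<in> ch w \<Longrightarrow>
  off c = Q ^ rk c + (\<Sum>c' \<in> {c' \<in> ch w. prec c' c}. Q ^ (rk c - rk c') * F (sz c'))"
  unfolding off_def using ch_props by simp

lemma rk_less: "c \<in> ch w \<Longrightarrow> c' \<in> ch w \<Longrightarrow> prec c' c \<Longrightarrow> rk c' < rk c"
proof -
  assume c: "c \<in> ch w" and c': "c' \<in> ch w" and p: "prec c' c"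
  have "{c'' \<in> ch w. prec c'' c'} \<subset> {c'' \<in> ch w. prec c'' c}"
    using p c' prec_trans prec_irrefl by blast
  then show ?thesis using rk_ch[OF c] rk_ch[OF c'] finite_ch
    by (metis (no_types, lifting) finite_subset mem_Collect_eq psubset_card_mono subsetI)
qed

lemma card_ch_D: "w \<in> V \<Longrightarrow> card (ch w) \<le> D"
  unfolding ch_def using ch_bound by simp

lemma card_ch_sz: "w \<in> V \<Longrightarrow> card (ch w) + 1 \<le> sz w"
proof -
  assume w: "w \<in> V"
  have "card (ch w) * 1 \<le> (\<Sum>c\<in>ch w. sz c)"
    using sum_bounded_below[of "ch w" 1 sz] sz_pos ch_props by fastforce
  then show ?thesis using sz_eq[OF w] by simp
qed

lemma rk_bound: "c \<in> ch w \<Longrightarrow> rk c + 1 \<le> card (ch w)"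
proof -
  assume c: "c \<in> ch w"
  have "{c' \<in> ch w. prec c' c} \<subseteq> ch w - {c}" using prec_irrefl by blast
  then have "rk c \<le> card (ch w - {c})" using rk_ch[OF c] finite_ch card_mono by (metis finite_Diff)
  moreover have "card (ch w - {c}) = card (ch w) - 1" using c finite_ch by (simp add: card_Diff_singleton)
  moreover have "card (ch w) > 0" using c finite_ch by (auto simp: card_gt_0_iff)
  ultimately show ?thesis by linarith
qed

lemma EXP': "j + 1 \<le> D \<Longrightarrow> Q ^ j \<le> real (j+1) powr (\<beta> - 1)"
proof -
  assume j: "j + 1 \<le> D"
  have "real (j+1) powr \<beta> = real (j+1) powr (\<beta> - 1) * real (j+1)"
    using powr_add[of "real (j+1)" "\<beta> - 1" 1] by simp
  then have "Q ^ j * real (j+1) \<le> real (j+1) powr (\<beta> - 1) * real (j+1)" using EXP[OF j] by simp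
  then show ?thesis by simp
qed

lemma count_lemma:
  assumes c: "c \<in> ch w" and c': "c' \<in> ch w" and p: "prec c' c"
  shows "(rk c - rk c' + 1) * sz c' \<le> (\<Sum>c''\<in>ch w. sz c'')"
proof -
  define A where "A = insert c {c'' \<in> ch w. prec c'' c}"
  define B where "B = {c'' \<in> ch w. prec c'' c'}"
  have fA: "finite A" and fB: "finite B" unfolding A_def B_def using finite_ch by auto
  have cA: "card A = rk c + 1" unfolding A_def using rk_ch[OF c] finite_ch prec_irrefl by simp
  have cB: "card B = rk c'" unfolding B_def using rk_ch[OF c'] by simp
  have lt: "rk c' < rk c" using rk_less[OF c c' p] .
  have "rk c - rk c' + 1 \<le> card (A - B)" using diff_card_le_card_Diff[OF fB, of A] cA cB lt by simp
  moreover have "card (A - B) * sz c' \<le> (\<Sum>t\<in>A - B. sz t)"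
  proof -
    have "\<And>t. t \<in> A - B \<Longrightarrow> sz c' \<le> sz t" unfolding B_def A_def
      using prec_sz c c' by auto
    then show ?thesis using sum_bounded_below[of "A - B" "sz c'" sz] by (simp add: mult.commute)
  qed
  moreover have "(\<Sum>t\<in>A - B. sz t) \<le> (\<Sum>c''\<in>ch w. sz c'')"
    by (rule sum_mono2) (use finite_ch c A_def in auto)
  ultimately show ?thesis by (meson le_trans mult_le_mono1)
qed

lemma sz_ch_less: "c \<in> ch w \<Longrightarrow> sz c < sz w"
proof -
  assume c: "c \<in> ch w"
  have wV: "w \<in> V" using ch_props[OF c] parV by metis
  have "desc c \<subset> desc w" using ch_desc_sub[OF c] w_notin_desc_ch[OF c] desc_self[OF wV] by blast
  then show ?thesis unfolding sz_def using finite_desc psubset_card_mono by blast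
qed

lemma F_split: "k \<ge> 1 \<Longrightarrow> F k = real k * real k powr (\<beta> - 1)"
  unfolding F_def using powr_add[of "real k" 1 "\<beta> - 1"] by simp

lemma KEY:
  assumes w: "w \<in> V" and c: "c \<in> ch w"
  shows "off c + F (sz c) \<le> F (sz w)"
proof -
  define N where "N = sz w"
  define G where "G = real N powr (\<beta> - 1)"
  define P where "P = {c' \<in> ch w. prec c' c}"
  have b0: "\<beta> - 1 \<ge> 0" using beta1 by simp
  have G0: "G \<ge> 0" unfolding G_def by simp
  have sumN: "(\<Sum>c''\<in>ch w. sz c'') + 1 = N" unfolding N_def using sz_eq[OF w] by simp
  have rkD: "rk c + 1 \<le> D" using rk_bound[OF c] card_ch_D[OF w] by simp
  have s1: "Q ^ rk c \<le> G"
  proof -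
    have "Q ^ rk c \<le> real (rk c + 1) powr (\<beta> - 1)" using EXP'[OF rkD] .
    also have "\<dots> \<le> G" unfolding G_def
      using rk_bound[OF c] card_ch_sz[OF w] N_def by (intro powr_mono2[OF b0]) auto
    finally show ?thesis .
  qed
  have s2: "Q ^ (rk c - rk c') * F (sz c') \<le> real (sz c') * G" if c'P: "c' \<in> P" for c'
  proof -
    have c': "c' \<in> ch w" and p: "prec c' c" using c'P P_def by auto
    define j where "j = rk c - rk c'"
    have jD: "j + 1 \<le> D" using rkD j_def by simp
    have s1': "sz c' \<ge> 1" using sz_pos ch_props[OF c'] by blast
    have cnt: "(j + 1) * sz c' \<le> N" using count_lemma[OF c c' p] sumN j_def by simp
    have "Q ^ j * F (sz c') = real (sz c') * (Q ^ j * real (sz c') powr (\<beta> - 1))"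
      using F_split[OF s1'] by simp
    also have "\<dots> \<le> real (sz c') * (real (j+1) powr (\<beta> - 1) * real (sz c') powr (\<beta> - 1))"
      using EXP'[OF jD] by (intro mult_left_mono mult_right_mono) auto
    also have "\<dots> = real (sz c') * (real ((j+1) * sz c') powr (\<beta> - 1))"
      by (subst of_nat_mult, subst powr_mult) auto
    also have "\<dots> \<le> real (sz c') * G"
    proof -
      have cntr: "real ((j + 1) * sz c') \<le> real N" using cnt of_nat_le_iff by blast
      show ?thesis unfolding G_def using cntr by (intro mult_left_mono powr_mono2[OF b0]) auto
    qed
    finally show ?thesis unfolding j_def .
  qed
  have s3: "F (sz c) \<le> real (sz c) * G"
  proof -
    have s1': "sz c \<ge> 1" using sz_pos ch_props[OF c] by blast
    have "sz c \<le> N" using sz_ch_less[OF c] N_def by simp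
    then have "real (sz c) powr (\<beta> - 1) \<le> G" unfolding G_def by (intro powr_mono2[OF b0]) auto
    then show ?thesis using F_split[OF s1'] by (simp add: mult_left_mono)
  qed
  have "off c + F (sz c) \<le> G + (\<Sum>c'\<in>P. real (sz c') * G) + real (sz c) * G"
    using off_ch[OF c] s1 s3 sum_mono[of P "\<lambda>c'. Q ^ (rk c - rk c') * F (sz c')" "\<lambda>c'. real (sz c') * G"] s2
    unfolding P_def by fastforce
  also have "\<dots> = G * (1 + real (\<Sum>c'\<in>insert c P. sz c'))"
  proof -
    have fP: "finite P" and cP: "c \<notin> P" using finite_ch prec_irrefl unfolding P_def by auto
    have e1: "(\<Sum>c'\<in>P. real (sz c') * G) = G * (\<Sum>c'\<in>P. real (sz c'))"
      by (simp add: sum_distrib_left mult.commute)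
    have e2: "real (\<Sum>c'\<in>insert c P. sz c') = real (sz c) + (\<Sum>c'\<in>P. real (sz c'))"
      using fP cP by (simp add: of_nat_sum)
    show ?thesis unfolding e1 e2 by (simp add: algebra_simps)
  qed
  also have "\<dots> \<le> G * real N"
  proof -
    have "(\<Sum>c'\<in>insert c P. sz c') \<le> (\<Sum>c''\<in>ch w. sz c'')"
      by (rule sum_mono2) (use finite_ch c P_def in auto)
    then have "(\<Sum>c'\<in>insert c P. sz c') + 1 \<le> N" using sumN by simp
    then have h: "1 + real (\<Sum>c'\<in>insert c P. sz c') \<le> real N"
      by (metis add.commute of_nat_1 of_nat_add of_nat_le_iff)
    show ?thesis by (rule mult_left_mono[OF h G0])
  qed
  also have "\<dots> = F N"
    using F_split[of N] sz_pos[OF w] N_def by (simp add: G_def mult.commute)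
  finally show ?thesis unfolding N_def .
qed

lemma SIB:
  assumes c1: "c1 \<in> ch w" and c2: "c2 \<in> ch w" and p: "prec c1 c2"
  shows "Q * (off c1 + F (sz c1)) \<le> off c2"
proof -
  define P1 where "P1 = {c' \<in> ch w. prec c' c1}"
  define P2 where "P2 = {c' \<in> ch w. prec c' c2}"
  have lt: "rk c1 < rk c2" using rk_less[OF c2 c1 p] .
  have Q0: "Q \<ge> 0" using Q1 by simp
  have fP1: "finite P1" using finite_ch P1_def by simp
  have "Q * off c1 + Q * F (sz c1) = Q ^ Suc (rk c1) + (\<Sum>c'\<in>P1. Q * Q ^ (rk c1 - rk c') * F (sz c')) + Q * F (sz c1)"
    using off_ch[OF c1] unfolding P1_def by (simp add: distrib_left sum_distrib_left mult.assoc)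
  also have "\<dots> \<le> Q ^ rk c2 + (\<Sum>c'\<in>P1. Q ^ (rk c2 - rk c') * F (sz c')) + Q ^ (rk c2 - rk c1) * F (sz c1)"
  proof -
    have "Q ^ Suc (rk c1) \<le> Q ^ rk c2" using lt Q1 by (intro power_increasing) auto
    moreover have "Q * Q ^ (rk c1 - rk c') * F (sz c') \<le> Q ^ (rk c2 - rk c') * F (sz c')" if "c' \<in> P1" for c'
    proof -
      have "rk c' < rk c1" using rk_less[OF c1] that P1_def by auto
      then have "Suc (rk c1 - rk c') \<le> rk c2 - rk c'" using lt by simp
      then have "Q ^ Suc (rk c1 - rk c') \<le> Q ^ (rk c2 - rk c')" using Q1 by (intro power_increasing) auto
      then show ?thesis using F_nonneg by (intro mult_right_mono) auto
    qed
    then have "(\<Sum>c'\<in>P1. Q * Q ^ (rk c1 - rk c') * F (sz c')) \<le> (\<Sum>c'\<in>P1. Q ^ (rk c2 - rk c') * F (sz c'))"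
      by (intro sum_mono) auto
    moreover have "Q * F (sz c1) \<le> Q ^ (rk c2 - rk c1) * F (sz c1)"
    proof -
      have "Q ^ 1 \<le> Q ^ (rk c2 - rk c1)" using lt Q1 by (intro power_increasing) auto
      then show ?thesis using F_nonneg by (intro mult_right_mono) auto
    qed
    ultimately show ?thesis by linarith
  qed
  also have "\<dots> = Q ^ rk c2 + (\<Sum>c'\<in>insert c1 P1. Q ^ (rk c2 - rk c') * F (sz c'))"
    using fP1 prec_irrefl P1_def by simp
  also have "\<dots> \<le> Q ^ rk c2 + (\<Sum>c'\<in>P2. Q ^ (rk c2 - rk c') * F (sz c'))"
  proof -
    have "insert c1 P1 \<subseteq> P2" using P1_def P2_def c1 p prec_trans by auto
    then show ?thesis using finite_ch P2_def Q0 F_nonneg by (intro add_left_mono sum_mono2) auto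
  qed
  also have "\<dots> = off c2" using off_ch[OF c2] P2_def by simp
  finally show ?thesis by (simp add: distrib_left)
qed

lemma span: "w \<in> V \<Longrightarrow> v \<in> desc w \<Longrightarrow> X v \<le> X w + F (sz w) - 1"
proof (induction "sz w" arbitrary: w v rule: less_induct)
  case less
  show ?case
  proof (cases "v = w")
    case True
    have "F (sz w) \<ge> 1" unfolding F_def using sz_pos[OF less.prems(1)] beta1
      by (intro ge_one_powr_ge_zero) auto
    then show ?thesis using True by simp
  next
    case False
    obtain c where c: "c \<in> ch w" "v \<in> desc c" using desc_decomp[OF less.prems(2) False] by blast
    have cV: "c \<in> V" and cr: "c \<noteq> r" and pc: "par c = w" using ch_props[OF c(1)] by auto
    have "X v \<le> X c + F (sz c) - 1" using less.hyps[OF sz_ch_less[OF c(1)] cV c(2)] .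
    also have "X c = X w + off c" using X_step[OF cV cr] pc by simp
    finally show ?thesis using KEY[OF less.prems(1) c(1)] by simp
  qed
qed

end

context rt begin

lemma desc_anc: "v \<in> desc w \<Longrightarrow> v \<in> V \<and> anc w v" unfolding desc_def by simp

lemma join_walk:
  assumes "walk V E ws1" "hd ws1 = v" "last ws1 = w"
    and "walk V E ws2" "hd ws2 = v'" "last ws2 = w"
  shows "\<exists>ws. walk V E ws \<and> hd ws = v \<and> last ws = v' \<and> len1 X ws = len1 X ws1 + len1 X ws2"
proof -
  have ne1: "ws1 \<noteq> []" using assms(1) by (cases ws1) auto
  have ne2: "ws2 \<noteq> []" using assms(4) by (cases ws2) auto
  obtain b where b: "ws1 = b @ [w]" using ne1 assms(3) by (metis append_butlast_last_id)
  obtain t where t: "rev ws2 = w # t" using ne2 assms(6)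
    by (metis hd_rev list.collapse rev_is_Nil_conv)
  have wr: "walk V E (w # t)" using walk_rev[of V E ws2] assms(4) t by simp
  have "walk V E (b @ w # t)" using walk_append[of V E b w t] assms(1) b wr by simp
  moreover have "hd (b @ w # t) = v" using assms(2) b by (cases b) auto
  moreover have "last (b @ w # t) = v'"
  proof -
    have "last (w # t) = last (rev ws2)" using t by simp
    also have "\<dots> = v'" using assms(5) ne2 by (simp add: last_rev)
    finally show ?thesis by simp
  qed
  moreover have "len1 X (b @ w # t) = len1 X ws1 + len1 X ws2"
    using len1_append[of X b w t] b len1_rev[of X ws2] t by simp
  ultimately show ?thesis by blast
qed

lemma cross:
  assumes w: "w \<in> V" and c1: "c1 \<in> ch w" and c2: "c2 \<in> ch w" and p: "prec c1 c2"
    and v: "v \<in> desc c1" and v': "v' \<in> desc c2"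
  shows "1 \<le> X v' - X v \<and> (\<exists>ws. walk V E ws \<and> hd ws = v \<and> last ws = v' \<and>
            len1 X ws \<le> (1 + \<epsilon>) * (X v' - X v) - 2)"
proof -
  have vw: "v \<in> desc w" and v'w: "v' \<in> desc w" using v v' ch_desc_sub c1 c2 by auto
  obtain ws1 where ws1: "walk V E ws1" "hd ws1 = v" "last ws1 = w" "len1 X ws1 = X v - X w"
    using walk_up desc_anc[OF vw] by blast
  obtain ws2 where ws2: "walk V E ws2" "hd ws2 = v'" "last ws2 = w" "len1 X ws2 = X v' - X w"
    using walk_up desc_anc[OF v'w] by blast
  obtain ws where ws: "walk V E ws" "hd ws = v" "last ws = v'" "len1 X ws = (X v - X w) + (X v' - X w)"
    using join_walk[OF ws1(1-3) ws2(1-3)] ws1(4) ws2(4) by auto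
  have c1V: "c1 \<in> V" and c1r: "c1 \<noteq> r" and pc1: "par c1 = w" using ch_props[OF c1] by auto
  have c2V: "c2 \<in> V" and c2r: "c2 \<noteq> r" and pc2: "par c2 = w" using ch_props[OF c2] by auto
  define A where "A = X v - X w"
  define B where "B = X v' - X w"
  define o1 where "o1 = off c1 + F (sz c1)"
  have Xc1: "X c1 = X w + off c1" using X_step[OF c1V c1r] pc1 by simp
  have Xc2: "X c2 = X w + off c2" using X_step[OF c2V c2r] pc2 by simp
  have A_up: "A \<le> o1 - 1" using span[OF c1V v] Xc1 A_def o1_def by simp
  have o1_0: "o1 \<ge> 0" using off_ge1[of c1] F_nonneg[of "sz c1"] o1_def by simp
  have B_lo: "B \<ge> Q * o1"
    using X_mono[of v' c2] desc_anc[OF v'] Xc2 SIB[OF c1 c2 p] B_def o1_def by simp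
  have "\<epsilon> * B \<ge> \<epsilon> * (Q * o1)" using B_lo eps by (intro mult_left_mono) auto
  moreover have "\<epsilon> * (Q * o1) \<ge> (2 + \<epsilon>) * o1" using epsQ o1_0
    by (metis mult.assoc mult_right_mono)
  moreover have "(2 + \<epsilon>) * o1 \<ge> (2 + \<epsilon>) * (A + 1)" using A_up eps by (intro mult_left_mono) auto
  ultimately have key: "\<epsilon> * B \<ge> (2 + \<epsilon>) * (A + 1)" by linarith
  have "1 \<le> B - A"
  proof -
    have "Q * o1 \<ge> o1" using Q1 o1_0 by (simp add: mult_le_cancel_right1)
    then show ?thesis using B_lo A_up by linarith
  qed
  moreover have "A + B \<le> (1 + \<epsilon>) * (B - A) - 2"
    using key eps by (simp add: algebra_simps)
  ultimately show ?thesis using ws A_def B_def by auto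
qed

lemma pair:
  "w \<in> V \<Longrightarrow> v \<in> desc w \<Longrightarrow> v' \<in> desc w \<Longrightarrow> v \<noteq> v' \<Longrightarrow>
   1 \<le> \<bar>X v - X v'\<bar> \<and> (\<exists>ws. walk V E ws \<and> hd ws = v \<and> last ws = v' \<and>
      (len1 X ws \<le> \<bar>X v - X v'\<bar> \<or> len1 X ws \<le> (1 + \<epsilon>) * \<bar>X v - X v'\<bar> - 2))"
proof (induction "sz w" arbitrary: w v v' rule: less_induct)
  case less
  note w = less.prems(1)
  have anc_case: "1 \<le> X u - X w \<and> (\<exists>ws. walk V E ws \<and> hd ws = u \<and> last ws = w \<and> len1 X ws = X u - X w)"
    if u: "u \<in> desc w" "u \<noteq> w" for u
  proof -
    obtain c where c: "c \<in> ch w" "u \<in> desc c" using desc_decomp[OF u] by blast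
    have cV: "c \<in> V" and cr: "c \<noteq> r" and pc: "par c = w" using ch_props[OF c(1)] by auto
    have "X c = X w + off c" using X_step[OF cV cr] pc by simp
    then have "1 \<le> X u - X w" using X_mono[of u c] desc_anc[OF c(2)] off_ge1[of c] by simp
    moreover obtain ws where "walk V E ws \<and> hd ws = u \<and> last ws = w \<and> len1 X ws = X u - X w"
      using walk_up desc_anc[OF u(1)] by blast
    ultimately show ?thesis by blast
  qed
  show ?case
  proof (cases "v = w \<or> v' = w")
    case True
    then show ?thesis
    proof
      assume vw: "v = w"
      then have v'w: "v' \<noteq> w" using less.prems by simp
      obtain ws where ws: "walk V E ws" "hd ws = v'" "last ws = w" "len1 X ws = X v' - X w"
        and d: "1 \<le> X v' - X w" using anc_case[OF less.prems(3) v'w] by blast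
      have "ws \<noteq> []" using ws(1) by (cases ws) auto
      then have "walk V E (rev ws) \<and> hd (rev ws) = v \<and> last (rev ws) = v' \<and> len1 X (rev ws) = \<bar>X v - X v'\<bar>"
        using ws d vw by (simp add: hd_rev last_rev walk_rev len1_rev)
      then show ?thesis using d vw by auto
    next
      assume v'w: "v' = w"
      then have vw: "v \<noteq> w" using less.prems by simp
      obtain ws where ws: "walk V E ws" "hd ws = v" "last ws = w" "len1 X ws = X v - X w"
        and d: "1 \<le> X v - X w" using anc_case[OF less.prems(2) vw] by blast
      then show ?thesis using v'w by auto
    qed
  next
    case False
    obtain c1 where c1: "c1 \<in> ch w" "v \<in> desc c1" using desc_decomp[OF less.prems(2)] False by blast
    obtain c2 where c2: "c2 \<in> ch w" "v' \<in> desc c2" using desc_decomp[OF less.prems(3)] False by blast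
    show ?thesis
    proof (cases "c1 = c2")
      case True
      then show ?thesis using less.hyps[OF sz_ch_less[OF c1(1)]] ch_props[OF c1(1)] c1 c2 less.prems(4)
        by blast
    next
      case False
      then have "prec c1 c2 \<or> prec c2 c1" using prec_total by blast
      then show ?thesis
      proof
        assume p: "prec c1 c2"
        show ?thesis using cross[OF w c1(1) c2(1) p c1(2) c2(2)] by auto
      next
        assume p: "prec c2 c1"
        obtain ws where ws: "walk V E ws" "hd ws = v'" "last ws = v"
          "len1 X ws \<le> (1 + \<epsilon>) * (X v - X v') - 2" and d: "1 \<le> X v - X v'"
          using cross[OF w c2(1) c1(1) p c2(2) c1(2)] by blast
        have "ws \<noteq> []" using ws(1) by (cases ws) auto
        then have "walk V E (rev ws) \<and> hd (rev ws) = v \<and> last (rev ws) = v' \<and>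
            len1 X (rev ws) \<le> (1 + \<epsilon>) * \<bar>X v - X v'\<bar> - 2"
          using ws d by (simp add: hd_rev last_rev walk_rev len1_rev)
        then show ?thesis using d by auto
      qed
    qed
  qed
qed

theorem oneD:
  shows "\<forall>v\<in>V. 0 \<le> X v \<and> X v \<le> real (card V) powr \<beta> - 1"
    and "\<forall>v\<in>V. \<forall>v'\<in>V. v \<noteq> v' \<longrightarrow> 1 \<le> \<bar>X v - X v'\<bar> \<and> (\<exists>ws. walk V E ws \<and> hd ws = v \<and> last ws = v' \<and>
      (len1 X ws \<le> \<bar>X v - X v'\<bar> \<or> len1 X ws \<le> (1 + \<epsilon>) * \<bar>X v - X v'\<bar> - 2))"
proof -
  show "\<forall>v\<in>V. 0 \<le> X v \<and> X v \<le> real (card V) powr \<beta> - 1"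
  proof
    fix v assume v: "v \<in> V"
    have "X r \<le> X v" using X_mono[OF v anc_r[OF v]] .
    moreover have "X v \<le> X r + F (sz r) - 1" using span[OF rV] desc_r v by blast
    moreover have "F (sz r) = real (card V) powr \<beta>" unfolding F_def sz_def desc_r ..
    ultimately show "0 \<le> X v \<and> X v \<le> real (card V) powr \<beta> - 1" using X_r by simp
  qed
  show "\<forall>v\<in>V. \<forall>v'\<in>V. v \<noteq> v' \<longrightarrow> 1 \<le> \<bar>X v - X v'\<bar> \<and> (\<exists>ws. walk V E ws \<and> hd ws = v \<and> last ws = v' \<and>
      (len1 X ws \<le> \<bar>X v - X v'\<bar> \<or> len1 X ws \<le> (1 + \<epsilon>) * \<bar>X v - X v'\<bar> - 2))"
    using pair[OF rV] desc_r by blast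
qed

end

lemma ln3_ge1: "ln (3::real) \<ge> 1"
proof -
  have "exp 1 \<le> (3::real)" by (rule exp_le)
  then have "ln (exp 1) \<le> ln (3::real)" by (subst ln_le_cancel_iff) auto
  then show ?thesis by simp
qed

lemma beta_ge:
  fixes q :: real and D :: nat
  assumes D: "D \<ge> 1" and q: "q \<ge> 3"
  shows "ln q / ln (1 + 1 / real D) \<ge> real D * ln q"
proof -
  have l0: "0 < ln (1 + 1 / real D)" using D by (intro ln_gt_zero) auto
  have l1: "ln (1 + 1 / real D) \<le> 1 / real D" using ln_add_one_self_le_self[of "1 / real D"] by simp
  have lq: "ln q \<ge> 0" using q by simp
  have "ln q / (1 / real D) \<le> ln q / ln (1 + 1 / real D)"
    using l0 l1 lq D by (intro divide_left_mono) (auto intro!: divide_pos_pos)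
  then show ?thesis by (simp add: mult.commute)
qed

lemma EXP_num:
  fixes q :: real and D j :: nat
  assumes q: "q \<ge> 3" and j: "j + 1 \<le> D"
  shows "(q - 1) ^ j * real (j+1) \<le> real (j+1) powr (ln q / ln (1 + 1 / real D))"
proof (cases "j = 0")
  case True then show ?thesis by simp
next
  case False
  define b where "b = ln q / ln (1 + 1 / real D)"
  define L where "L = ln (real (j+1))"
  have D1: "D \<ge> 1" using j by simp
  have l0: "0 < ln (1 + 1 / real D)" using D1 by (intro ln_gt_zero) auto
  have lq1: "ln q \<ge> 1" using ln3_ge1 q by (smt (verit) ln_le_cancel_iff)
  have lhs_pos: "(q - 1) ^ j * real (j+1) > 0" using q by simp
  have lnL: "ln ((q - 1) ^ j * real (j+1)) = real j * ln (q - 1) + L"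
    unfolding L_def using q by (simp add: ln_mult ln_realpow)
  have lnR: "ln (real (j+1) powr b) = b * L" unfolding L_def by simp
  have lnq1: "ln (q - 1) \<le> ln q" using q by simp
  have goal: "real j * ln (q - 1) + L \<le> b * L"
  proof (cases "j = 1")
    case True
    have D2: "D \<ge> 2" using j True by simp
    have "1 + 1 / real D \<le> 3 / 2" using D2 by (simp add: field_simps)
    moreover have "0 < 1 + 1 / real D" by (simp add: add_pos_nonneg)
    ultimately have l32: "ln (1 + 1 / real D) \<le> ln (3 / 2)" by (subst ln_le_cancel_iff) auto
    have "ln q / ln (3/2) \<le> b" unfolding b_def using l0 l32 lq1
      by (intro divide_left_mono) auto
    moreover have "3 * ln (3/2::real) \<le> 2 * ln 2"
    proof -
      have "ln ((3/2::real) ^ 3) \<le> ln ((2::real) ^ 2)" by (subst ln_le_cancel_iff) (auto simp: power3_eq_cube)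
      moreover have "ln ((2::real)^2) = real 2 * ln 2" by (rule ln_realpow)
      ultimately show ?thesis by (simp add: ln_realpow)
    qed
    moreover have "ln (3/2::real) > 0" by simp
    ultimately have "b * ln 2 \<ge> 3/2 * ln q"
    proof -
      assume a: "ln q / ln (3/2) \<le> b" "3 * ln (3/2::real) \<le> 2 * ln 2" "ln (3/2::real) > 0"
      have h1: "ln q / ln (3/2) * ln 2 \<le> b * ln 2" using a(1) by (intro mult_right_mono) auto
      have h2: "3/2 * ln q \<le> ln q / ln (3/2) * ln 2"
      proof -
        have "ln q * (3/2 * ln (3/2)) \<le> ln q * ln 2" using a(2) lq1 by (intro mult_left_mono) auto
        then have "3/2 * ln q * ln (3/2) \<le> ln q * ln 2" by (simp add: algebra_simps)
        then show ?thesis using a(3) by (simp add: field_simps)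
      qed
      show ?thesis using order.trans[OF h2 h1] .
    qed
    moreover have "ln (q - 1) + ln 2 \<le> 3/2 * ln q"
    proof -
      have "4 * (q - 1)^2 \<le> q ^ 3"
      proof -
        have "q ^ 3 - 4 * (q - 1)^2 = q * (q - 2)^2 + 4 * (q - 1)" by (simp add: power2_eq_square power3_eq_cube algebra_simps)
        moreover have "q * (q - 2)^2 + 4 * (q - 1) \<ge> 0" using q by simp
        ultimately show ?thesis by simp
      qed
      then have "ln (4 * (q - 1)^2) \<le> ln (q ^ 3)" using q by (subst ln_le_cancel_iff) auto
      moreover have "ln (4 * (q - 1)^2) = 2 * (ln (q - 1) + ln 2)"
      proof -
        have "4 * (q - 1)^2 = (2 * (q - 1))^2" by (simp add: power2_eq_square algebra_simps)
        moreover have "ln ((2 * (q - 1))^2) = real 2 * ln (2 * (q - 1))" by (rule ln_realpow)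
        moreover have "ln (2 * (q - 1)) = ln 2 + ln (q - 1)" using ln_mult[of 2 "q - 1"] q by simp
        ultimately show ?thesis by simp
      qed
      ultimately show ?thesis by (simp add: ln_realpow)
    qed
    ultimately show ?thesis using True L_def by simp
  next
    case False
    have j2: "j \<ge> 2" using False \<open>j \<noteq> 0\<close> by simp
    have L1: "L \<ge> 1"
    proof -
      have "ln 3 \<le> L" unfolding L_def using j2 by (subst ln_le_cancel_iff) auto
      then show ?thesis using ln3_ge1 by simp
    qed
    have "b \<ge> real D * ln q" unfolding b_def using beta_ge[OF D1 q] .
    then have bL: "b * L \<ge> real D * ln q * L" using L1 by (intro mult_right_mono) auto
    have "real D * ln q * L \<ge> real (j+1) * ln q * L" using j lq1 L1 by (intro mult_right_mono) auto
    moreover have "real (j+1) * ln q * L = real j * (ln q * L) + ln q * L" by (simp add: algebra_simps)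
    moreover have "real j * (ln q * L) \<ge> real j * ln q" using lq1 L1 by (intro mult_left_mono) auto
    moreover have "ln q * L \<ge> L" using lq1 L1 by (simp add: mult_le_cancel_right1)
    moreover have "real j * ln (q - 1) \<le> real j * ln q" using lnq1 by (intro mult_left_mono) auto
    ultimately show ?thesis using bL by linarith
  qed
  have "ln ((q - 1) ^ j * real (j+1)) \<le> ln (real (j+1) powr b)" unfolding lnL lnR using goal .
  then show ?thesis using lhs_pos unfolding b_def[symmetric] by (subst (asm) ln_le_cancel_iff) auto
qed


lemma finite_E: "simple_graph V E \<Longrightarrow> finite E"
proof -
  assume sg: "simple_graph V E"
  have fV: "finite V" using sg unfolding simple_graph_def by simp
  have "E \<subseteq> Pow V"
  proof
    fix e assume e: "e \<in> E"
    obtain a b where "a \<in> V" "b \<in> V" "e = {a, b}" using sg e unfolding simple_graph_def by blast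
    then show "e \<in> Pow V" by simp
  qed
  moreover have "finite (Pow V)" using fV by simp
  ultimately show ?thesis by (rule finite_subset)
qed

lemma edge_form: "simple_graph V E \<Longrightarrow> e \<in> E \<Longrightarrow> w \<in> e \<Longrightarrow> \<exists>x. x \<noteq> w \<and> x \<in> V \<and> w \<in> V \<and> e = {w, x}"
proof -
  assume sg: "simple_graph V E" and e: "e \<in> E" and w: "w \<in> e"
  obtain a b where ab: "a \<noteq> b" "a \<in> V" "b \<in> V" "e = {a, b}" using sg e unfolding simple_graph_def by blast
  show ?thesis
  proof (cases "w = a")
    case True then show ?thesis using ab by (intro exI[of _ b]) auto
  next
    case False
    then have "w = b" using w ab by blast
    then show ?thesis using ab by (intro exI[of _ a]) (auto simp: insert_commute)
  qed
qed

lemma walk_snoc: "walk V E ws \<Longrightarrow> x \<in> V \<Longrightarrow> adj E (last ws) x \<Longrightarrow> walk V E (ws @ [x])"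
proof -
  assume w: "walk V E ws" and x: "x \<in> V" and a: "adj E (last ws) x"
  have ne: "ws \<noteq> []" using w by (cases ws) auto
  obtain b l where bl: "ws = b @ [l]" using ne rev_exhaust by blast
  have lV: "l \<in> V" using w bl walk_char[of V E ws] by simp
  have "walk V E [l, x]" using x a bl lV by simp
  moreover have "walk V E (b @ [l])" using w bl by simp
  ultimately have "walk V E (b @ l # [x])" using walk_append[of V E b l "[x]"] by simp
  then show ?thesis using bl by simp
qed

lemma tree_leaf:
  assumes T: "is_tree V E"
  shows "\<exists>r\<in>V. degree E r \<le> 1"
proof -
  have sg: "simple_graph V E" and ne: "V \<noteq> {}" and ac: "acyclic_graph V E"
    using T unfolding is_tree_def by auto
  have fV: "finite V" using sg simple_graph_def by auto
  define Ps where "Ps = {ws. is_path V E ws}"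
  have fin: "finite Ps"
  proof -
    have "Ps \<subseteq> {ws. set ws \<subseteq> V \<and> length ws \<le> card V}"
    proof
      fix ws assume "ws \<in> Ps"
      then have d: "distinct ws" and sV: "set ws \<subseteq> V" unfolding Ps_def is_path_def by auto
      have "length ws = card (set ws)" using distinct_card[OF d] by simp
      also have "\<dots> \<le> card V" using card_mono[OF fV sV] .
      finally show "ws \<in> {ws. set ws \<subseteq> V \<and> length ws \<le> card V}" using sV by simp
    qed
    then show ?thesis using finite_lists_length_le[OF fV] finite_subset by blast
  qed
  obtain v where v: "v \<in> V" using ne by blast
  have "[v] \<in> Ps" unfolding Ps_def is_path_def using v by simp
  then have Pne: "Ps \<noteq> {}" by blast
  define Lm where "Lm = Max (length ` Ps)"
  have "Lm \<in> length ` Ps" unfolding Lm_def using fin Pne by (intro Max_in) auto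
  then obtain ws where ws: "ws \<in> Ps" "length ws = Lm" by blast
  have maxl: "length ys \<le> length ws" if "is_path V E ys" for ys
  proof -
    have "ys \<in> Ps" using that Ps_def by simp
    then have "length ys \<le> Lm" unfolding Lm_def using fin by (intro Max_ge) auto
    then show ?thesis using ws by simp
  qed
  have wp: "is_path V E ws" using ws Ps_def by simp
  have wsne: "ws \<noteq> []" using wp unfolding is_path_def by simp
  define w where "w = last ws"
  have wV: "w \<in> V" using wp wsne unfolding w_def is_path_def by auto
  define pr where "pr = ws ! (length ws - 2)"
  have claim: "e = {w, pr}" if e: "e \<in> E" "w \<in> e" for e
  proof -
    obtain x where x: "x \<noteq> w" "x \<in> V" "e = {w, x}" using edge_form[OF sg e] by blast
    have adjwx: "adj E w x" unfolding adj_def using x e by simp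
    show ?thesis
    proof (cases "x \<in> set ws")
      case False
      have "is_path V E (ws @ [x])"
        using wp False walk_snoc[of V E ws x] x adjwx w_def by (auto simp: is_path_walk)
      then show ?thesis using maxl by fastforce
    next
      case True
      then obtain i where i: "i < length ws" "ws ! i = x" by (meson in_set_conv_nth)
      have il: "i \<noteq> length ws - 1" using i x(1) w_def wsne by (metis last_conv_nth)
      show ?thesis
      proof (cases "i = length ws - 2")
        case True
        then show ?thesis using x i pr_def by simp
      next
        case False
        define ys where "ys = drop i ws"
        have ys_ne: "ys \<noteq> []" using i ys_def by simp
        have "walk V E (take i ws @ hd ys # tl ys)" using wp ys_ne ys_def by (simp add: is_path_walk)
        then have "walk V E ys" using walk_append[of V E "take i ws" "hd ys" "tl ys"] ys_ne by simp
        moreover have "distinct ys" using wp unfolding ys_def is_path_def by simp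
        ultimately have yp: "is_path V E ys" by (simp add: is_path_walk)
        have "length ys \<ge> 3" using ys_def i il False by simp
        moreover have "hd ys = x" using ys_def i hd_drop_conv_nth by metis
        moreover have "last ys = w" using ys_def w_def i by simp
        ultimately have "\<exists>ws. is_path V E ws \<and> length ws \<ge> 3 \<and> adj E (last ws) (hd ws)"
          using yp adjwx by blast
        then show ?thesis using ac acyclic_graph_def by blast
      qed
    qed
  qed
  have "{e \<in> E. w \<in> e} \<subseteq> {{w, pr}}" using claim by blast
  then have "card {e \<in> E. w \<in> e} \<le> card {{w, pr}}" by (intro card_mono) auto
  then have "degree E w \<le> 1" unfolding degree_def by simp
  then show ?thesis using wV by blast
qed


lemma bfs_parent:
  assumes T: "is_tree V E" and r: "r \<in> V"
  defines "hop \<equiv> \<lambda>v. LEAST k. \<exists>ws. walk V E ws \<and> hd ws = r \<and> last ws = v \<and> length ws = Suc k"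
  shows "\<And>v. v \<in> V \<Longrightarrow> v \<noteq> r \<Longrightarrow> \<exists>u\<in>V. {v, u} \<in> E \<and> hop u < hop v"
proof -
  fix v assume v: "v \<in> V" "v \<noteq> r"
  have "\<exists>ws. is_path V E ws \<and> hd ws = r \<and> last ws = v"
    using T r v unfolding is_tree_def connected_graph_def by blast
  then obtain ws0 where "walk V E ws0" "hd ws0 = r" "last ws0 = v" by (auto simp: is_path_walk)
  moreover have "ws0 \<noteq> []" using \<open>walk V E ws0\<close> by (cases ws0) auto
  ultimately have ex: "\<exists>k ws. walk V E ws \<and> hd ws = r \<and> last ws = v \<and> length ws = Suc k"
    by (metis Suc_pred length_greater_0_conv)
  have "\<exists>ws. walk V E ws \<and> hd ws = r \<and> last ws = v \<and> length ws = Suc (hop v)"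
    unfolding hop_def by (rule LeastI_ex) (use ex in blast)
  then obtain ws where ws: "walk V E ws" "hd ws = r" "last ws = v" "length ws = Suc (hop v)"
    by blast
  have l2: "length ws \<ge> 2"
  proof (rule ccontr)
    assume "\<not> length ws \<ge> 2"
    then have "length ws = 1" using ws(4) by simp
    then obtain a where "ws = [a]" by (metis One_nat_def length_0_conv length_Suc_conv)
    then show False using ws v by simp
  qed
  obtain b u where bu: "ws = b @ [u, v]"
  proof -
    obtain b' l where bl: "ws = b' @ [l]" using l2 rev_exhaust by (metis list.size(3) not_numeral_le_zero)
    have "b' \<noteq> []" using bl l2 by auto
    then obtain b u where "b' = b @ [u]" using rev_exhaust by blast
    moreover have "l = v" using bl ws(3) by simp
    ultimately show ?thesis using that bl by simp
  qed
  have w1: "walk V E (b @ [u])" and w2: "walk V E [u, v]"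
    using walk_append[of V E b u "[v]"] ws(1) bu by auto
  have uV: "u \<in> V" and e: "{u, v} \<in> E" using w2 by (auto simp: adj_def)
  have "hd (b @ [u]) = r" using ws(2) bu by (cases b) auto
  moreover have "length (b @ [u]) = Suc (hop v - 1)" using ws(4) bu by simp
  ultimately have "hop u \<le> hop v - 1" unfolding hop_def using w1
    by (intro Least_le) auto
  moreover have "hop v \<ge> 1" using l2 ws(4) by simp
  ultimately have "hop u < hop v" by simp
  then show "\<exists>u\<in>V. {v, u} \<in> E \<and> hop u < hop v" using uV e by (metis insert_commute)
qed

lemma degree_le_max: "simple_graph V E \<Longrightarrow> u \<in> V \<Longrightarrow> degree E u \<le> max_degree V E"
  unfolding max_degree_def simple_graph_def by auto

lemma tree_structure:
  assumes T: "is_tree V E" and d2: "max_degree V E \<ge> 2"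
  shows "\<exists>r par h. r \<in> V \<and> par r = r \<and>
     (\<forall>v. v \<in> V \<longrightarrow> v \<noteq> r \<longrightarrow> par v \<in> V \<and> {v, par v} \<in> E \<and> h (par v) < (h v :: nat)) \<and>
     (\<forall>u\<in>V. card {c\<in>V. c \<noteq> r \<and> par c = u} \<le> max_degree V E - 1)"
proof -
  have sg: "simple_graph V E" using T is_tree_def by auto
  obtain r where r: "r \<in> V" "degree E r \<le> 1" using tree_leaf[OF T] by blast
  define hop where "hop = (\<lambda>v. LEAST k. \<exists>ws. walk V E ws \<and> hd ws = r \<and> last ws = v \<and> length ws = Suc k)"
  have bp: "\<And>v. v \<in> V \<Longrightarrow> v \<noteq> r \<Longrightarrow> \<exists>u\<in>V. {v, u} \<in> E \<and> hop u < hop v"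
    using bfs_parent[OF T r(1)] hop_def by blast
  define par where "par = (\<lambda>v. if v \<in> V \<and> v \<noteq> r then SOME u. u \<in> V \<and> {v, u} \<in> E \<and> hop u < hop v else r)"
  have pp: "par v \<in> V \<and> {v, par v} \<in> E \<and> hop (par v) < hop v" if "v \<in> V" "v \<noteq> r" for v
    using someI_ex[OF bp[OF that, unfolded Bex_def]] that par_def by simp
  have pr: "par r = r" using par_def by simp
  have cb: "card {c\<in>V. c \<noteq> r \<and> par c = u} \<le> max_degree V E - 1" if u: "u \<in> V" for u
  proof -
    define C where "C = {c\<in>V. c \<noteq> r \<and> par c = u}"
    define S where "S = {e \<in> E. u \<in> e}"
    have fS: "finite S" using finite_E[OF sg] S_def by simp
    have cu: "c \<noteq> u" if "c \<in> C" for c using pp[of c] that C_def by auto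
    have inj: "inj_on (\<lambda>c. {c, u}) C"
      using cu by (auto simp: inj_on_def doubleton_eq_iff)
    have img: "(\<lambda>c. {c, u}) ` C \<subseteq> S" using pp C_def S_def by auto
    have cardC: "card C = card ((\<lambda>c. {c, u}) ` C)" using card_image[OF inj] by simp
    have degS: "card S \<le> max_degree V E" using degree_le_max[OF sg u] unfolding degree_def S_def by simp
    show ?thesis
    proof (cases "u = r")
      case True
      have "card C \<le> card S" using cardC card_mono[OF fS img] by simp
      also have "\<dots> \<le> 1" using r True unfolding S_def degree_def by simp
      finally show ?thesis using d2 C_def by simp
    next
      case False
      have pu: "{u, par u} \<in> S" using pp[OF u False] S_def by simp
      have "{u, par u} \<notin> (\<lambda>c. {c, u}) ` C"
      proof
        assume "{u, par u} \<in> (\<lambda>c. {c, u}) ` C"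
        then obtain c where c: "c \<in> C" "{u, par u} = {c, u}" by blast
        then have "c = par u" using cu[OF c(1)] by (auto simp: doubleton_eq_iff)
        then show False using pp[OF u False] pp[of c] c(1) C_def by auto
      qed
      then have "insert {u, par u} ((\<lambda>c. {c, u}) ` C) \<subseteq> S" using pu img by blast
      then have "card (insert {u, par u} ((\<lambda>c. {c, u}) ` C)) \<le> card S" using card_mono fS by blast
      moreover have "finite ((\<lambda>c. {c, u}) ` C)" using img fS finite_subset by blast
      ultimately have "card C + 1 \<le> card S" using cardC \<open>{u, par u} \<notin> _\<close> by simp
      then show ?thesis using degS C_def by simp
    qed
  qed
  show ?thesis using r(1) pr pp cb by blast
qed


lemma parabola_noncollinear:
  fixes x1 x2 x3 \<delta> :: real
  assumes d: "\<delta> \<noteq> 0" and ne: "x1 \<noteq> x2" "x1 \<noteq> x3" "x2 \<noteq> x3"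
  shows "\<not> collinear {(x1, \<delta> * x1^2), (x2, \<delta> * x2^2), (x3, \<delta> * x3^2)}"
proof
  assume "collinear {(x1, \<delta> * x1^2), (x2, \<delta> * x2^2), (x3, \<delta> * x3^2)}"
  then obtain u v :: "real \<times> real" where uv: "\<forall>x \<in> {(x1, \<delta> * x1^2), (x2, \<delta> * x2^2), (x3, \<delta> * x3^2)}. \<exists>c. x = u + c *\<^sub>R v"
    unfolding collinear_alt by blast
  obtain c1 where c1: "(x1, \<delta> * x1^2) = u + c1 *\<^sub>R v" using uv by blast
  obtain c2 where c2: "(x2, \<delta> * x2^2) = u + c2 *\<^sub>R v" using uv by blast
  obtain c3 where c3: "(x3, \<delta> * x3^2) = u + c3 *\<^sub>R v" using uv by blast
  have e1: "x1 - x2 = (c1 - c2) * fst v" "\<delta> * x1^2 - \<delta> * x2^2 = (c1 - c2) * snd v"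
    using arg_cong[OF c1, of fst] arg_cong[OF c2, of fst] arg_cong[OF c1, of snd] arg_cong[OF c2, of snd]
    by (auto simp: algebra_simps)
  have e2: "x1 - x3 = (c1 - c3) * fst v" "\<delta> * x1^2 - \<delta> * x3^2 = (c1 - c3) * snd v"
    using arg_cong[OF c1, of fst] arg_cong[OF c3, of fst] arg_cong[OF c1, of snd] arg_cong[OF c3, of snd]
    by (auto simp: algebra_simps)
  have "(x1 - x2) * (\<delta> * x1^2 - \<delta> * x3^2) = (x1 - x3) * (\<delta> * x1^2 - \<delta> * x2^2)"
    unfolding e1 e2 by (simp add: algebra_simps)
  then have "\<delta> * ((x1 - x2) * (x1 - x3) * (x3 - x2)) = 0"
    by (simp add: power2_eq_square algebra_simps)
  then show False using d ne by simp
qed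

lemma dist_parabola:
  fixes a b \<delta> M :: real
  assumes "0 \<le> a" "a \<le> M" "0 \<le> b" "b \<le> M" "\<delta> \<ge> 0"
  shows "\<bar>a - b\<bar> \<le> dist (a, \<delta> * a^2) (b, \<delta> * b^2)"
    and "dist (a, \<delta> * a^2) (b, \<delta> * b^2) \<le> (1 + 2 * \<delta> * M) * \<bar>a - b\<bar>"
proof -
  have dd: "dist (a, \<delta> * a^2) (b, \<delta> * b^2) = sqrt ((a - b)^2 + (\<delta> * a^2 - \<delta> * b^2)^2)"
    by (simp add: dist_Pair_Pair dist_real_def)
  show "\<bar>a - b\<bar> \<le> dist (a, \<delta> * a^2) (b, \<delta> * b^2)"
    unfolding dd using real_sqrt_sum_squares_ge1[of "\<bar>a - b\<bar>"] by simp
  have f: "\<delta> * a^2 - \<delta> * b^2 = (\<delta> * (a + b)) * (a - b)" by (simp add: power2_eq_square algebra_simps)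
  have "\<bar>\<delta> * a^2 - \<delta> * b^2\<bar> = \<delta> * \<bar>a + b\<bar> * \<bar>a - b\<bar>"
    unfolding f abs_mult using assms by simp
  also have "\<dots> \<le> \<delta> * (2 * M) * \<bar>a - b\<bar>"
    using assms by (intro mult_right_mono mult_left_mono) auto
  finally have "\<bar>\<delta> * a^2 - \<delta> * b^2\<bar> \<le> 2 * \<delta> * M * \<bar>a - b\<bar>" by simp
  then show "dist (a, \<delta> * a^2) (b, \<delta> * b^2) \<le> (1 + 2 * \<delta> * M) * \<bar>a - b\<bar>"
    unfolding dd using sqrt_sum_squares_le_sum_abs[of "a - b" "\<delta> * a^2 - \<delta> * b^2"]
    by (simp add: algebra_simps)
qed

lemma segment_collinear:
  fixes a b x :: "real \<times> real"
  assumes "x \<in> closed_segment a b"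
  shows "collinear {a, b, x}"
proof -
  have "{a, b, x} \<subseteq> closed_segment a b" using assms by auto
  then show ?thesis using collinear_subset collinear_closed_segment by blast
qed


lemma edge_uv: "simple_graph V E \<Longrightarrow> {u, v} \<in> E \<Longrightarrow> u \<in> V \<and> v \<in> V \<and> u \<noteq> v"
  unfolding simple_graph_def by (metis doubleton_eq_iff insert_absorb2 singleton_insert_inj_eq)

lemma main:
  fixes V :: "nat set" and E and \<epsilon> :: real
  assumes eps: "\<epsilon> > 0" and T: "is_tree V E" and d2: "max_degree V E \<ge> 2"
  defines "n \<equiv> real (card V)" and "d \<equiv> real (max_degree V E)"
  defines "\<beta> \<equiv> log 2 (2 + real_of_int \<lceil>2 / \<epsilon>\<rceil>) / log 2 (d / (d - 1))"
  shows "\<exists>p. proper_drawing V E p \<and> no_three_collinear V p \<and>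
             spanning_ratio V E p \<le> 1 + \<epsilon> \<and>
             (\<forall>u\<in>V. \<forall>v\<in>V. u \<noteq> v \<longrightarrow> dist (p u) (p v) \<ge> 1) \<and>
             drawing_width V p \<le> 4 * n powr \<beta> \<and> drawing_height V p \<le> 4 * n powr \<beta> \<and>
             edge_length_ratio E p \<le> 4 * n powr \<beta>"
proof -
  have sg: "simple_graph V E" and Vne: "V \<noteq> {}" using T is_tree_def by auto
  have fV: "finite V" using sg simple_graph_def by auto
  define dn where "dn = max_degree V E"
  define D where "D = dn - 1"
  have D1: "D \<ge> 1" using d2 D_def dn_def by simp
  define k where "k = \<lceil>2 / \<epsilon>\<rceil>"
  have kge: "real_of_int k \<ge> 2 / \<epsilon>" unfolding k_def by (rule le_of_int_ceiling)
  have kpos: "real_of_int k > 0" using kge eps by (smt (verit) divide_pos_pos)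
  define q where "q = 2 + real_of_int k"
  have "k > 0" using kpos by simp
  then have "k \<ge> 1" by simp
  then have "real_of_int k \<ge> 1" by simp
  then have q3: "q \<ge> 3" using q_def by simp
  define Q where "Q = q - 1"
  have Q1: "Q \<ge> 1" using q3 Q_def by simp
  have epsQ: "\<epsilon> * Q \<ge> 2 + \<epsilon>"
  proof -
    have "\<epsilon> * real_of_int k \<ge> \<epsilon> * (2 / \<epsilon>)" using kge eps by (intro mult_left_mono) auto
    then have "\<epsilon> * real_of_int k \<ge> 2" using eps by simp
    then show ?thesis unfolding Q_def q_def by (simp add: algebra_simps)
  qed
  have dD: "d / (d - 1) = 1 + 1 / real D"
  proof -
    have "d - 1 = real D" unfolding d_def D_def dn_def using d2 by (simp add: of_nat_diff)
    moreover have "real D > 0" using D1 by simp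
    ultimately show ?thesis by (simp add: field_simps)
  qed
  have beta_eq: "\<beta> = ln q / ln (1 + 1 / real D)"
    unfolding \<beta>_def dD q_def[symmetric] k_def[symmetric] by (simp add: log_def)
  have beta1: "\<beta> \<ge> 1"
  proof -
    have "\<beta> \<ge> real D * ln q" unfolding beta_eq using beta_ge[OF D1 q3] .
    moreover have "real D * ln q \<ge> ln q" using D1 q3 by (simp add: mult_le_cancel_right1)
    moreover have "ln q \<ge> 1" using ln3_ge1 q3 by (smt (verit) ln_le_cancel_iff)
    ultimately show ?thesis by linarith
  qed
  have EXP: "\<And>j. j + 1 \<le> D \<Longrightarrow> Q ^ j * real (j+1) \<le> real (j+1) powr \<beta>"
    unfolding beta_eq Q_def using EXP_num[OF q3] by blast
  obtain r par h where r: "r \<in> V" "par r = r"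
    and pp: "\<forall>v. v \<in> V \<longrightarrow> v \<noteq> r \<longrightarrow> par v \<in> V \<and> {v, par v} \<in> E \<and> h (par v) < (h v :: nat)"
    and cb: "\<forall>u\<in>V. card {c\<in>V. c \<noteq> r \<and> par c = u} \<le> max_degree V E - 1"
    using tree_structure[OF T d2] by blast
  interpret R: rt V E r par h D Q \<beta> \<epsilon>
    by unfold_locales (use fV r pp cb Q1 beta1 epsQ eps EXP D_def dn_def in auto)
  define X where "X = R.X"
  have Xb: "\<forall>v\<in>V. 0 \<le> X v \<and> X v \<le> n powr \<beta> - 1" using R.oneD(1) X_def n_def by simp
  have Xp: "\<forall>v\<in>V. \<forall>v'\<in>V. v \<noteq> v' \<longrightarrow> 1 \<le> \<bar>X v - X v'\<bar> \<and> (\<exists>ws. walk V E ws \<and> hd ws = v \<and> last ws = v' \<and>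
      (len1 X ws \<le> \<bar>X v - X v'\<bar> \<or> len1 X ws \<le> (1 + \<epsilon>) * \<bar>X v - X v'\<bar> - 2))"
    using R.oneD(2) X_def by simp
  define Wn where "Wn = n powr \<beta>"
  have n1: "n \<ge> 1" using fV Vne n_def by (simp add: Suc_leI card_gt_0_iff)
  have Wn1: "Wn \<ge> 1" unfolding Wn_def using n1 beta1 by (intro ge_one_powr_ge_zero) auto
  define M where "M = Wn + 1"
  have M1: "M \<ge> 1" using Wn1 M_def by simp
  have XM: "\<forall>v\<in>V. 0 \<le> X v \<and> X v \<le> M"
  proof
    fix v assume "v \<in> V"
    then have "0 \<le> X v \<and> X v \<le> n powr \<beta> - 1" using Xb by blast
    then show "0 \<le> X v \<and> X v \<le> M" unfolding M_def Wn_def by simp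
  qed
  define s where "s = \<epsilon> / ((1 + \<epsilon>)^2 * M)"
  define \<delta> where "\<delta> = s / (2 * M)"
  have s0: "s > 0" using eps M1 s_def by simp
  have d0: "\<delta> > 0" using s0 M1 \<delta>_def by simp
  have sM: "2 * \<delta> * M = s" using M1 \<delta>_def by simp
  have s_le_eps: "s \<le> \<epsilon>"
  proof -
    have p1: "(1 + \<epsilon>)^2 \<ge> 1" using eps by (intro one_le_power) auto
    have "(1 + \<epsilon>)^2 * M \<ge> 1 * 1" using p1 M1 by (intro mult_mono) auto
    then have "(1 + \<epsilon>)^2 * M \<ge> 1" by simp
    then show ?thesis unfolding s_def using eps by (simp add: divide_le_eq mult_le_cancel_left1)
  qed
  have s1: "s * (1 + \<epsilon>) * M \<le> 1"
  proof -
    define A where "A = (1 + \<epsilon>) * M"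
    have A0: "A > 0" using eps M1 A_def by simp
    have e0: "1 + \<epsilon> > 0" using eps by simp
    have "s = \<epsilon> / ((1 + \<epsilon>) * A)" unfolding s_def A_def by (simp add: power2_eq_square mult.assoc)
    then have "s * (1 + \<epsilon>) * M = \<epsilon> / ((1 + \<epsilon>) * A) * A" by (simp add: A_def mult.assoc)
    also have "\<dots> = \<epsilon> / (1 + \<epsilon>)" using A0 e0 by simp
    finally have "s * (1 + \<epsilon>) * M = \<epsilon> / (1 + \<epsilon>)" .
    also have "\<dots> \<le> 1" using eps by simp
    finally show ?thesis .
  qed
  have s_le1: "s \<le> 1"
  proof -
    have "1 * 1 \<le> (1 + \<epsilon>) * M" using eps M1 by (intro mult_mono) auto
    then have "s * 1 \<le> s * ((1 + \<epsilon>) * M)" using s0 by (intro mult_left_mono) auto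
    then show ?thesis using s1 by (simp add: mult.assoc)
  qed
  define p where "p = (\<lambda>v. (X v, \<delta> * (X v)^2))"
  have dlo: "\<bar>X a - X b\<bar> \<le> dist (p a) (p b)" if "a \<in> V" "b \<in> V" for a b
    unfolding p_def using dist_parabola(1)[of "X a" M "X b" \<delta>] XM that d0 by auto
  have dhi: "dist (p a) (p b) \<le> (1 + s) * \<bar>X a - X b\<bar>" if "a \<in> V" "b \<in> V" for a b
    unfolding p_def using dist_parabola(2)[of "X a" M "X b" \<delta>] XM that d0 sM by auto
  have sep: "\<forall>u\<in>V. \<forall>v\<in>V. u \<noteq> v \<longrightarrow> dist (p u) (p v) \<ge> 1"
    using Xp dlo by (meson order.trans)
  have Xinj: "X u \<noteq> X v" if "u \<in> V" "v \<in> V" "u \<noteq> v" for u v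
  proof -
    have "1 \<le> \<bar>X u - X v\<bar>" using Xp that by blast
    then show ?thesis by auto
  qed
  have ntc: "no_three_collinear V p"
    unfolding no_three_collinear_def p_def
    using parabola_noncollinear d0 Xinj by simp
  have proper: "proper_drawing V E p"
    unfolding proper_drawing_def
  proof (intro conjI ballI impI)
    show "inj_on p V"
    proof (rule inj_onI)
      fix a b assume ab: "a \<in> V" "b \<in> V" "p a = p b"
      then have "X a = X b" unfolding p_def by simp
      then show "a = b" using Xinj ab by blast
    qed
  next
    fix u v w assume uvw: "u \<in> V" "v \<in> V" "w \<in> V" and a: "adj E u v" and wu: "w \<noteq> u" and wv: "w \<noteq> v"
    have uv: "u \<noteq> v" using edge_uv[OF sg, of u v] a unfolding adj_def by simp
    have uw: "u \<noteq> w" and vw: "v \<noteq> w" using wu wv by auto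
    show "p w \<notin> closed_segment (p u) (p v)"
    proof
      assume "p w \<in> closed_segment (p u) (p v)"
      then have "collinear {p u, p v, p w}" by (rule segment_collinear)
      then show False using ntc[unfolded no_three_collinear_def, rule_format, OF uvw uv uw vw] by simp
    qed
  qed
  obtain ea eb where eab: "{ea, eb} \<in> E"
  proof -
    have "max_degree V E \<in> degree E ` V" unfolding max_degree_def using fV Vne by (intro Max_in) auto
    then obtain v where v: "v \<in> V" "degree E v = max_degree V E" by auto
    then have c2: "card {e \<in> E. v \<in> e} \<ge> 2" using d2 unfolding degree_def by simp
    have "{e \<in> E. v \<in> e} \<noteq> {}"
    proof
      assume h: "{e \<in> E. v \<in> e} = {}"
      have "card {e \<in> E. v \<in> e} = 0" unfolding h by simp
      then show False using c2 by linarith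
    qed
    then obtain e where e: "e \<in> E" by blast
    then obtain a b where "e = {a, b}" using sg unfolding simple_graph_def by blast
    then show ?thesis using that[of a b] e by simp
  qed
  have eabV: "ea \<in> V" "eb \<in> V" "ea \<noteq> eb" using edge_uv[OF sg eab] by auto
  have span: "spanning_ratio V E p \<le> 1 + \<epsilon>"
    unfolding spanning_ratio_def
  proof (rule cSup_least)
    show "{graph_dist V E p u v / dist (p u) (p v) |u v. u \<in> V \<and> v \<in> V \<and> u \<noteq> v} \<noteq> {}"
      using eabV by blast
  next
    fix x assume "x \<in> {graph_dist V E p u v / dist (p u) (p v) |u v. u \<in> V \<and> v \<in> V \<and> u \<noteq> v}"
    then obtain u v where x: "x = graph_dist V E p u v / dist (p u) (p v)" and uv: "u \<in> V" "v \<in> V" "u \<noteq> v"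
      by blast
    obtain ws where ws: "walk V E ws" "hd ws = u" "last ws = v"
      and cases: "len1 X ws \<le> \<bar>X u - X v\<bar> \<or> len1 X ws \<le> (1 + \<epsilon>) * \<bar>X u - X v\<bar> - 2"
      using Xp uv by blast
    obtain ps where ps: "is_path V E ps" "hd ps = u" "last ps = v" "path_length p ps \<le> path_length p ws"
      using walk_to_path[OF ws(1), of p] ws by auto
    have gd: "graph_dist V E p u v \<le> path_length p ps"
      unfolding graph_dist_def
    proof (rule cInf_lower)
      show "path_length p ps \<in> {path_length p ws |ws. is_path V E ws \<and> hd ws = u \<and> last ws = v}"
        using ps by blast
      show "bdd_below {path_length p ws |ws. is_path V E ws \<and> hd ws = u \<and> last ws = v}"
        by (rule bdd_belowI[of _ 0]) (auto simp: path_length_nonneg)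
    qed
    have setws: "set ws \<subseteq> V" using ws(1) unfolding walk_char by simp
    have dhi': "\<forall>a\<in>V. \<forall>b\<in>V. dist (p a) (p b) \<le> (1 + s) * \<bar>X a - X b\<bar>" using dhi by simp
    have pl: "path_length p ws \<le> (1 + s) * len1 X ws"
      by (rule path_length_le_len1[OF setws dhi'])
    define \<Delta> where "\<Delta> = \<bar>X u - X v\<bar>"
    have "0 \<le> X u" "X u \<le> M" "0 \<le> X v" "X v \<le> M" using XM uv by auto
    then have \<Delta>M: "\<Delta> \<le> M" unfolding \<Delta>_def abs_le_iff by linarith
    have l0: "len1 X ws \<ge> 0" by (rule len1_nonneg)
    have "(1 + s) * len1 X ws \<le> (1 + \<epsilon>) * \<Delta>"
      using cases unfolding \<Delta>_def[symmetric]
    proof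
      assume c: "len1 X ws \<le> \<Delta>"
      have "(1 + s) * len1 X ws \<le> (1 + s) * \<Delta>" using c s0 by (intro mult_left_mono) auto
      also have "\<dots> \<le> (1 + \<epsilon>) * \<Delta>" using s_le_eps \<Delta>_def by (intro mult_right_mono) auto
      finally show ?thesis .
    next
      assume c: "len1 X ws \<le> (1 + \<epsilon>) * \<Delta> - 2"
      have "s * len1 X ws \<le> s * ((1 + \<epsilon>) * M)"
      proof -
        have "len1 X ws \<le> (1 + \<epsilon>) * M" using c \<Delta>M eps
          by (smt (verit) mult_left_mono)
        then show ?thesis using s0 by (intro mult_left_mono) auto
      qed
      then have "s * len1 X ws \<le> 1" using s1 by (simp add: mult.assoc)
      then show ?thesis using c by (simp add: algebra_simps)
    qed
    also have "\<dots> \<le> (1 + \<epsilon>) * dist (p u) (p v)" using dlo[OF uv(1,2)] eps \<Delta>_def by (intro mult_left_mono) auto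
    finally have "graph_dist V E p u v \<le> (1 + \<epsilon>) * dist (p u) (p v)" using gd ps(4) pl by linarith
    moreover have "dist (p u) (p v) \<ge> 1" using sep uv by blast
    then have "dist (p u) (p v) > 0" by linarith
    ultimately show "x \<le> 1 + \<epsilon>" unfolding x by (simp add: divide_le_eq)
  qed
  have fimg: "finite (X ` V)" using fV by simp
  have width: "drawing_width V p \<le> 4 * n powr \<beta>"
  proof -
    have "drawing_width V p = Max (X ` V) - Min (X ` V)" unfolding drawing_width_def p_def
      by (simp add: image_image)
    moreover have "Max (X ` V) \<le> Wn - 1" using Xb fimg Vne Wn_def by (simp add: Max_le_iff)
    moreover have "Min (X ` V) \<ge> 0" using Xb fimg Vne by (simp add: Min_ge_iff)
    ultimately show ?thesis using Wn1 Wn_def by simp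
  qed
  have height: "drawing_height V p \<le> 4 * n powr \<beta>"
  proof -
    have fimg2: "finite ((\<lambda>v. \<delta> * (X v)^2) ` V)" using fV by simp
    have "drawing_height V p = Max ((\<lambda>v. \<delta> * (X v)^2) ` V) - Min ((\<lambda>v. \<delta> * (X v)^2) ` V)"
      unfolding drawing_height_def p_def by simp
    moreover have "Max ((\<lambda>v. \<delta> * (X v)^2) ` V) \<le> \<delta> * M^2"
    proof -
      have "\<forall>v\<in>V. \<delta> * (X v)^2 \<le> \<delta> * M^2" using XM d0 by (auto intro!: mult_left_mono power_mono)
      then show ?thesis using fimg2 Vne by (simp add: Max_le_iff)
    qed
    moreover have "Min ((\<lambda>v. \<delta> * (X v)^2) ` V) \<ge> 0" using fimg2 Vne d0 by (simp add: Min_ge_iff)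
    moreover have "\<delta> * M^2 \<le> 1"
    proof -
      have "\<delta> * M^2 = s * M / 2" using M1 \<delta>_def by (simp add: power2_eq_square)
      also have "\<dots> \<le> s * (1 + \<epsilon>) * M" using s0 eps M1 by (simp add: mult_le_cancel_right1)
      finally show ?thesis using s1 by simp
    qed
    ultimately show ?thesis using Wn1 Wn_def by simp
  qed
  have ratio: "edge_length_ratio E p \<le> 4 * n powr \<beta>"
  proof -
    define ES where "ES = {dist (p u) (p v) |u v. {u, v} \<in> E}"
    have fES: "finite ES"
    proof -
      have "ES \<subseteq> (\<lambda>(u, v). dist (p u) (p v)) ` (V \<times> V)"
      proof
        fix x assume "x \<in> ES"
        then obtain u v where x: "x = dist (p u) (p v)" and e: "{u, v} \<in> E" unfolding ES_def by blast
        have "u \<in> V" "v \<in> V" using edge_uv[OF sg e] by auto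
        then show "x \<in> (\<lambda>(u, v). dist (p u) (p v)) ` (V \<times> V)" using x by (intro image_eqI[of _ _ "(u, v)"]) auto
      qed
      then show ?thesis using fV finite_subset by blast
    qed
    have neES: "ES \<noteq> {}" unfolding ES_def using eab by blast
    have bnd: "1 \<le> x \<and> x \<le> 2 * M" if xE: "x \<in> ES" for x
    proof -
      obtain u v where x: "x = dist (p u) (p v)" and e: "{u, v} \<in> E" using xE unfolding ES_def by blast
      have uv: "u \<in> V" "v \<in> V" "u \<noteq> v" using edge_uv[OF sg e] by auto
      have "x \<le> (1 + s) * \<bar>X u - X v\<bar>" using dhi uv x by simp
      also have "\<dots> \<le> 2 * M"
      proof -
        have "0 \<le> X u" "X u \<le> M" "0 \<le> X v" "X v \<le> M" using XM uv by auto
        then have "\<bar>X u - X v\<bar> \<le> M" unfolding abs_le_iff by linarith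
        moreover have "1 + s \<le> 2" using s_le1 by simp
        ultimately show ?thesis by (intro mult_mono) auto
      qed
      finally show ?thesis using sep uv x by auto
    qed
    have "Max ES \<le> 2 * M" using bnd fES neES by (simp add: Max_le_iff)
    moreover have "Min ES \<ge> 1" using bnd fES neES by (simp add: Min_ge_iff)
    moreover have "Max ES \<ge> 0"
    proof -
      have "Max ES \<in> ES" using fES neES by (rule Max_in)
      then show ?thesis using bnd by force
    qed
    ultimately have "Max ES / Min ES \<le> 2 * M"
    proof -
      assume mx: "Max ES \<le> 2 * M" and mn: "Min ES \<ge> 1" and m0: "Max ES \<ge> 0"
      have "Max ES * 1 \<le> Max ES * Min ES" using mn m0 by (intro mult_left_mono) auto
      then have "Max ES / Min ES \<le> Max ES" using mn by (simp add: divide_le_eq)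
      then show ?thesis using mx by linarith
    qed
    then show ?thesis unfolding edge_length_ratio_def ES_def[symmetric] using M_def Wn_def Wn1 by simp
  qed
  show ?thesis using proper ntc span sep width height ratio by blast
qed

theorem theorem7:
  shows "\<exists>C>0. \<forall>(V :: nat set) E (\<epsilon>::real).
     \<epsilon> > 0 \<longrightarrow> is_tree V E \<longrightarrow> max_degree V E \<ge> 2 \<longrightarrow>
     (let n = real (card V); d = real (max_degree V E);
          B = C * (n powr (log 2 (2 + real_of_int \<lceil>2 / \<epsilon>\<rceil>) / log 2 (d / (d - 1))))
                * max 1 (1 / \<epsilon>)
      in \<exists>p. proper_drawing V E p \<and> no_three_collinear V p \<and>
             spanning_ratio V E p \<le> 1 + \<epsilon> \<and>
             (\<forall>u\<in>V. \<forall>v\<in>V. u \<noteq> v \<longrightarrow> dist (p u) (p v) \<ge> 1) \<and>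
             drawing_width V p \<le> B \<and> drawing_height V p \<le> B \<and>
             edge_length_ratio E p \<le> B)"
proof (intro exI[of _ "4::real"] conjI allI impI)
  fix V :: "nat set" and E and \<epsilon> :: real
  assume eps: "\<epsilon> > 0" and T: "is_tree V E" and d2: "max_degree V E \<ge> 2"
  define n where "n = real (card V)"
  define d where "d = real (max_degree V E)"
  define \<beta> where "\<beta> = log 2 (2 + real_of_int \<lceil>2 / \<epsilon>\<rceil>) / log 2 (d / (d - 1))"
  obtain p where p: "proper_drawing V E p \<and> no_three_collinear V p \<and>
             spanning_ratio V E p \<le> 1 + \<epsilon> \<and>
             (\<forall>u\<in>V. \<forall>v\<in>V. u \<noteq> v \<longrightarrow> dist (p u) (p v) \<ge> 1) \<and>
             drawing_width V p \<le> 4 * n powr \<beta> \<and> drawing_height V p \<le> 4 * n powr \<beta> \<and>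
             edge_length_ratio E p \<le> 4 * n powr \<beta>"
    using main[OF eps T d2] unfolding n_def d_def \<beta>_def by blast
  have "4 * n powr \<beta> \<le> 4 * n powr \<beta> * max 1 (1 / \<epsilon>)"
    by (simp add: mult_le_cancel_left1)
  then show "let n = real (card V); d = real (max_degree V E);
          B = 4 * (n powr (log 2 (2 + real_of_int \<lceil>2 / \<epsilon>\<rceil>) / log 2 (d / (d - 1))))
                * max 1 (1 / \<epsilon>)
      in \<exists>p. proper_drawing V E p \<and> no_three_collinear V p \<and>
             spanning_ratio V E p \<le> 1 + \<epsilon> \<and>
             (\<forall>u\<in>V. \<forall>v\<in>V. u \<noteq> v \<longrightarrow> dist (p u) (p v) \<ge> 1) \<and>
             drawing_width V p \<le> B \<and> drawing_height V p \<le> B \<and>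
             edge_length_ratio E p \<le> B"
    unfolding Let_def n_def[symmetric] d_def[symmetric] \<beta>_def[symmetric]
    using p by (meson order.trans)
qed simp


end
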